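(* Let $\lambda>0$ and $T>0$. A triple $(X,Y,A)$, where $A:[0,T]\to M_d(\mathbb{R})$ and $X,Y$ are random processes on $[0,T]$, solves the Hamilton system $$\frac{dX_t}{dt}=A_tX_t,\ X_0\sim p_0;\qquad \frac{dY_t}{dt}=-A_t^\top Y_t,\ Y_T=Z-X_T;\qquad A_t=\frac1\lambda\mathbb{E}[Y_tX_t^\top]\ \ (t\in[0,T])$$ if and only if there is a matrix ${\sf C}\in M_d(\mathbb{R})$ solving the characteristic equation $$\lambda\,{\sf C}=F^\top(R-F)\Sigma_0,\qquad F:=e^{2T\Omega}e^{T{\sf C}^\top},\qquad \Omega:=\tfrac12({\sf C}-{\sf C}^\top),$$ such that $$X_t=e^{2t\Omega}e^{t{\sf C}^\top}X_0,\qquad Y_t=e^{2t\Omega}e^{(T-t){\sf C}}e^{-2T\Omega}(Z-X_T),\qquad A_t=e^{2t\Omega}{\sf C}e^{-2t\Omega}.$$ For such a solution the cost is $${\sf J}[A]=\frac{\lambda T}{2}\mathrm{tr}({\sf C}^\top{\sf C})+\frac12\mathrm{tr}\big((F-R)^\top(F-R)\Sigma_0\big)+\frac12\mathbb{E}[|\xi|^2].$$ Moreover: (i) $A_t\equiv{\sf C}$ is constant in $t$ if and only if ${\sf C}$ is a normal matrix; (ii) if $\Sigma_0=I$ and ${\sf C}$ is normal, then $R$ is a normal matrix. In particular, if $\Sigma_0=I$ and $R$ is not normal, every solution $A$ of the Hamilton system is non-constant in $t$.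
   Context: Setup: $d\ge 1$. $X_0$ is a random vector in $\mathbb{R}^d$ with law $p_0$ and finite second moment $\Sigma_0=\mathbb{E}[X_0X_0^\top]$. The noise $\xi$ is a random vector in $\mathbb{R}^d$, independent of $X_0$, with zero mean and finite second moment. $R\in M_d(\mathbb{R})$ and $Z=RX_0+\xi$. The functional is ${\sf J}[A]=\mathbb{E}\big[\frac{\lambda}{2}\int_0^T\mathrm{tr}(A_t^\top A_t)\,dt+\frac12|X_T-Z|^2\big]$, where $X_t$ solves $\frac{dX_t}{dt}=A_tX_t$ from $X_0$. A real matrix $M$ is normal if $MM^\top=M^\top M$. *)

theory Defs
  imports "HOL-Probability.Probability"
begin

primrec matpow :: "real^'n^'n \<Rightarrow> nat \<Rightarrow> real^'n^'n" where
  "matpow M 0 = mat 1"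
| "matpow M (Suc k) = M ** matpow M k"

definition mexp :: "real^'n^'n \<Rightarrow> real^'n^'n" where
  "mexp M = (\<Sum>k. (1 / fact k) *\<^sub>R matpow M k)"

definition normal_matrix :: "real^'n^'n \<Rightarrow> bool" where
  "normal_matrix M \<longleftrightarrow> M ** transpose M = transpose M ** M"

definition outer :: "real^'n \<Rightarrow> real^'n \<Rightarrow> real^'n^'n" where
  "outer x y = (\<chi> i j. x $ i * y $ j)"

definition hamilton_solution ::
  "'a measure \<Rightarrow> ('a \<Rightarrow> real^'n) \<Rightarrow> ('a \<Rightarrow> real^'n) \<Rightarrow> real \<Rightarrow> real
   \<Rightarrow> (real \<Rightarrow> 'a \<Rightarrow> real^'n) \<Rightarrow> (real \<Rightarrow> 'a \<Rightarrow> real^'n) \<Rightarrow> (real \<Rightarrow> real^'n^'n) \<Rightarrow> bool" where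
  "hamilton_solution M X0 Z lam T X Y A \<longleftrightarrow>
     continuous_on {0..T} A \<and>
     (\<forall>\<omega>\<in>space M. X 0 \<omega> = X0 \<omega>) \<and>
     (\<forall>\<omega>\<in>space M. \<forall>t\<in>{0..T}. ((\<lambda>s. X s \<omega>) has_vector_derivative (A t *v X t \<omega>)) (at t within {0..T})) \<and>
     (\<forall>\<omega>\<in>space M. \<forall>t\<in>{0..T}. ((\<lambda>s. Y s \<omega>) has_vector_derivative (- (transpose (A t) *v Y t \<omega>))) (at t within {0..T})) \<and>
     (\<forall>\<omega>\<in>space M. Y T \<omega> = Z \<omega> - X T \<omega>) \<and>
     (\<forall>t\<in>{0..T}. A t = (1 / lam) *\<^sub>R integral\<^sup>L M (\<lambda>\<omega>. outer (Y t \<omega>) (X t \<omega>)))"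

definition cost ::
  "'a measure \<Rightarrow> ('a \<Rightarrow> real^'n) \<Rightarrow> real \<Rightarrow> real
   \<Rightarrow> (real \<Rightarrow> 'a \<Rightarrow> real^'n) \<Rightarrow> (real \<Rightarrow> real^'n^'n) \<Rightarrow> real" where
  "cost M Z lam T X A =
     lam / 2 * integral {0..T} (\<lambda>t. trace (transpose (A t) ** A t))
     + 1 / 2 * integral\<^sup>L M (\<lambda>\<omega>. (norm (X T \<omega> - Z \<omega>))\<^sup>2)"

definition skew_part :: "real^'n^'n \<Rightarrow> real^'n^'n" where
  "skew_part C = (1/2) *\<^sub>R (C - transpose C)"

definition Fmat :: "real \<Rightarrow> real^'n^'n \<Rightarrow> real^'n^'n" where
  "Fmat T C = mexp ((2 * T) *\<^sub>R skew_part C) ** mexp (T *\<^sub>R transpose C)"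

end

theory Submission
  imports Defs
begin

lemma mm_add_rdistrib: "((A::real^'n^'m) + B) ** C = A ** C + B ** C"
  by (vector matrix_matrix_mult_def sum.distrib[symmetric] field_simps)
lemma mm_diff_rdistrib: "((A::real^'n^'m) - B) ** C = A ** C - B ** C"
  by (vector matrix_matrix_mult_def sum_subtractf[symmetric] field_simps)
lemma mm_diff_ldistrib: "(A::real^'n^'m) ** (B - C) = A ** B - A ** C"
  by (vector matrix_matrix_mult_def sum_subtractf[symmetric] field_simps)
lemma mm_uminus_left: "(- (A::real^'n^'m)) ** B = - (A ** B)"
  by (vector matrix_matrix_mult_def sum_negf[symmetric])
lemma mm_uminus_right: "(A::real^'n^'m) ** (- B) = - (A ** B)"
  by (vector matrix_matrix_mult_def sum_negf[symmetric])

lemma norm_sq_vec: "(norm (x::'a::real_inner^'n))^2 = (\<Sum>i\<in>UNIV. (norm (x$i))^2)"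
  by (simp add: power2_norm_eq_inner inner_vec_def)

lemma row_mv: "(A *v x) $ i = A $ i \<bullet> (x::real^'n)"
  by (simp add: matrix_vector_mult_def inner_vec_def mult.commute)

lemma norm_mv_le: "norm (A *v x) \<le> norm (A::real^'n^'m) * norm (x::real^'n)"
proof -
  have "(norm (A *v x))^2 = (\<Sum>i\<in>UNIV. ((A *v x)$i)^2)"
    by (simp add: norm_sq_vec)
  also have "\<dots> \<le> (\<Sum>i\<in>UNIV. (norm (A$i))^2 * (norm x)^2)"
  proof (rule sum_mono)
    fix i
    have "\<bar>(A *v x)$i\<bar> \<le> norm (A$i) * norm x"
      unfolding row_mv by (rule Cauchy_Schwarz_ineq2)
    then have "\<bar>(A *v x)$i\<bar>^2 \<le> (norm (A$i) * norm x)^2"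
      by (intro power_mono) auto
    then show "((A *v x)$i)^2 \<le> (norm (A$i))^2 * (norm x)^2"
      by (simp add: power_mult_distrib)
  qed
  also have "\<dots> = (norm A * norm x)^2"
    by (simp add: norm_sq_vec[of A] sum_distrib_right power_mult_distrib)
  finally show ?thesis
    by (rule power2_le_imp_le) simp
qed

lemma norm_transpose: "norm (transpose (A::real^'n^'m)) = norm A"
proof -
  have "(norm (transpose A))^2 = (norm A)^2"
    unfolding norm_sq_vec[of A] norm_sq_vec[of "transpose A"]
    by (simp add: norm_sq_vec transpose_def real_norm_def) (rule sum.swap)
  then show ?thesis by (simp add: power2_eq_iff_nonneg)
qed

lemma row_mm: "((A::real^_^_) ** B) $ i = transpose B *v (A $ i)"
  by (auto simp add: matrix_matrix_mult_def matrix_vector_mult_def transpose_def vec_eq_iff mult.commute intro!: sum.cong)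

lemma norm_mm_le: "norm (A ** B) \<le> norm (A::real^'n^'m) * norm (B::real^'k^'n)"
proof -
  have "(norm (A ** B))^2 = (\<Sum>i\<in>UNIV. (norm ((A ** B)$i))^2)"
    by (simp add: norm_sq_vec)
  also have "\<dots> \<le> (\<Sum>i\<in>UNIV. (norm (A$i))^2 * (norm B)^2)"
  proof (rule sum_mono)
    fix i
    have "norm ((A ** B)$i) \<le> norm (A$i) * norm B"
      unfolding row_mm using norm_mv_le[of "transpose B" "A$i"]
      by (simp add: norm_transpose mult.commute)
    then show "(norm ((A ** B)$i))^2 \<le> (norm (A$i))^2 * (norm B)^2"
      by (metis norm_ge_zero power_mono power_mult_distrib)
  qed
  also have "\<dots> = (norm A * norm B)^2"
    by (simp add: norm_sq_vec[of A] sum_distrib_right power_mult_distrib)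
  finally show ?thesis
    by (rule power2_le_imp_le) simp
qed

lemma bounded_bilinear_mm: "bounded_bilinear (\<lambda>(A::real^'n^'m) (B::real^'k^'n). A ** B)"
proof (rule bounded_bilinear.intro)
  show "(a + a') ** b = a ** b + a' ** b" for a a' :: "real^'n^'m" and b :: "real^'k^'n"
    by (simp add: mm_add_rdistrib)
  show "a ** (b + b') = a ** b + a ** b'" for a :: "real^'n^'m" and b b' :: "real^'k^'n"
    by (simp add: matrix_add_ldistrib)
  show "(r *\<^sub>R a) ** b = r *\<^sub>R (a ** b)" for r and a :: "real^'n^'m" and b :: "real^'k^'n"
    by (simp add: scalar_matrix_assoc)
  show "a ** (r *\<^sub>R b) = r *\<^sub>R (a ** b)" for r and a :: "real^'n^'m" and b :: "real^'k^'n"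
    by (simp add: matrix_scalar_ac scalar_matrix_assoc)
  show "\<exists>K. \<forall>a b. norm (a ** b) \<le> norm (a::real^'n^'m) * norm (b::real^'k^'n) * K"
    by (rule exI[of _ 1]) (simp add: norm_mm_le)
qed

lemma bounded_bilinear_mv: "bounded_bilinear (\<lambda>(A::real^'n^'m) (x::real^'n). A *v x)"
proof (rule bounded_bilinear.intro)
  show "(a + a') *v b = a *v b + a' *v b" for a a' :: "real^'n^'m" and b :: "real^'n"
    by (simp add: matrix_vector_mult_add_rdistrib)
  show "a *v (b + b') = a *v b + a *v b'" for a :: "real^'n^'m" and b b' :: "real^'n"
    by (simp add: matrix_vector_right_distrib)
  show "(r *\<^sub>R a) *v b = r *\<^sub>R (a *v b)" for r and a :: "real^'n^'m" and b :: "real^'n"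
    by (simp add: vec_eq_iff matrix_vector_mult_def sum_distrib_left mult_ac)
  show "a *v (r *\<^sub>R b) = r *\<^sub>R (a *v b)" for r and a :: "real^'n^'m" and b :: "real^'n"
    by (simp add: vec_eq_iff matrix_vector_mult_def sum_distrib_left mult_ac)
  show "\<exists>K. \<forall>a b. norm (a *v b) \<le> norm (a::real^'n^'m) * norm (b::real^'n) * K"
    by (rule exI[of _ 1]) (simp add: norm_mv_le)
qed

lemma bounded_linear_transpose: "bounded_linear (transpose :: real^'n^'m \<Rightarrow> real^'m^'n)"
proof (rule bounded_linear_intro[where K=1])
  show "transpose (x + y) = transpose x + transpose y" for x y :: "real^'n^'m"
    by (simp add: transpose_def vec_eq_iff)
  show "transpose (r *\<^sub>R x) = r *\<^sub>R transpose x" for r and x :: "real^'n^'m"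
    by (simp add: transpose_def vec_eq_iff)
  show "norm (transpose x) \<le> norm x * 1" for x :: "real^'n^'m"
    by (simp add: norm_transpose)
qed

lemma matpow_norm: "norm (matpow M k) \<le> norm (mat 1 :: real^'n^'n) * norm (M::real^'n^'n) ^ k"
proof (induction k)
  case 0 then show ?case by simp
next
  case (Suc k)
  have "norm (matpow M (Suc k)) \<le> norm M * norm (matpow M k)"
    by (simp add: norm_mm_le)
  also have "\<dots> \<le> norm M * (norm (mat 1 :: real^'n^'n) * norm M ^ k)"
    by (intro mult_left_mono Suc.IH) simp
  finally show ?case by (simp add: mult_ac)
qed

lemma summable_mexp: "summable (\<lambda>k. (1 / fact k) *\<^sub>R matpow (M::real^'n^'n) k)"
proof (rule summable_norm_cancel, rule summable_comparison_test)
  show "\<exists>N. \<forall>n\<ge>N. norm (norm ((1 / fact n) *\<^sub>R matpow M n)) \<le> norm (mat 1 :: real^'n^'n) * (inverse (fact n) * norm M ^ n)"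
    using matpow_norm[of M] by (auto intro!: exI[of _ 0] mult_left_mono simp: divide_simps mult_ac)
  show "summable (\<lambda>n. norm (mat 1 :: real^'n^'n) * (inverse (fact n) * norm M ^ n))"
    by (intro summable_mult summable_exp)
qed

lemma matpow_scale: "matpow (t *\<^sub>R M) k = t ^ k *\<^sub>R matpow (M::real^'n^'n) k"
  by (induction k) (simp_all add: matrix_scalar_ac scalar_matrix_assoc[symmetric])

lemma matpow_commute:
  assumes "N ** M = M ** (N::real^'n^'n)"
  shows "N ** matpow M k = matpow M k ** N"
proof (induction k)
  case 0 then show ?case by simp
next
  case (Suc k)
  have "N ** matpow M (Suc k) = (N ** M) ** matpow M k" by (simp add: matrix_mul_assoc)
  also have "\<dots> = M ** (N ** matpow M k)" by (simp add: assms matrix_mul_assoc)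
  also have "\<dots> = matpow M (Suc k) ** N" by (simp add: Suc.IH matrix_mul_assoc)
  finally show ?case .
qed

lemma mexp_commute:
  assumes "N ** M = M ** (N::real^'n^'n)"
  shows "N ** mexp M = mexp M ** N"
proof -
  have "N ** mexp M = (\<Sum>k. N ** ((1 / fact k) *\<^sub>R matpow M k))"
    unfolding mexp_def
    by (rule bounded_linear.suminf[OF bounded_bilinear.bounded_linear_right[OF bounded_bilinear_mm] summable_mexp])
  also have "\<dots> = (\<Sum>k. ((1 / fact k) *\<^sub>R matpow M k) ** N)"
    by (simp add: matrix_scalar_ac scalar_matrix_assoc[symmetric] matpow_commute[OF assms])
  also have "\<dots> = mexp M ** N"
    unfolding mexp_def
    by (rule bounded_linear.suminf[OF bounded_bilinear.bounded_linear_left[OF bounded_bilinear_mm] summable_mexp, symmetric])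
  finally show ?thesis .
qed

lemma matpow_transpose: "transpose (matpow M k) = matpow (transpose (M::real^'n^'n)) k"
proof (induction k)
  case 0 then show ?case by simp
next
  case (Suc k)
  have "transpose (matpow M (Suc k)) = transpose (matpow M k) ** transpose M"
    by (simp add: matrix_transpose_mul)
  also have "\<dots> = transpose M ** matpow (transpose M) k"
    by (simp add: Suc.IH matpow_commute[of "transpose M" "transpose M"])
  finally show ?case by simp
qed

lemma transpose_scaleR: "transpose (c *\<^sub>R (A::real^'n^'m)) = c *\<^sub>R transpose A"
  by (simp add: transpose_def vec_eq_iff)

lemma mexp_transpose: "transpose (mexp M) = mexp (transpose (M::real^'n^'n))"
proof -
  have "transpose (mexp M) = (\<Sum>k. transpose ((1 / fact k) *\<^sub>R matpow M k))"
    unfolding mexp_def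
    by (rule bounded_linear.suminf[OF bounded_linear_transpose summable_mexp])
  also have "\<dots> = mexp (transpose M)"
    unfolding mexp_def
    by (simp add: matpow_transpose transpose_scaleR)
  finally show ?thesis .
qed

lemma mexp_zero: "mexp (0::real^'n^'n) = mat 1"
proof -
  have "(\<lambda>k. (1 / fact k) *\<^sub>R matpow (0::real^'n^'n) k) = (\<lambda>k. if k = 0 then mat 1 else 0)"
    by (rule ext) (case_tac k, simp_all)
  then show ?thesis
    unfolding mexp_def using sums_single[of 0 "\<lambda>_. mat 1 :: real^'n^'n"] sums_unique by fastforce
qed

lemma mat_has_vector_derivative_entries:
  fixes f :: "real \<Rightarrow> real^'n^'m"
  assumes "\<And>i j. ((\<lambda>t. f t $ i $ j) has_real_derivative (f' $ i $ j)) (at t within S)"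
  shows "(f has_vector_derivative f') (at t within S)"
  unfolding has_vector_derivative_def
proof (subst has_derivative_componentwise_within, intro ballI)
  fix b :: "real^'n^'m" assume "b \<in> Basis"
  then obtain i j where b: "b = axis i (axis j 1)"
    by (auto simp: Basis_vec_def)
  have e: "(\<lambda>x. x * f' $ i $ j) = (*) (f' $ i $ j)" by (auto simp: mult.commute)
    show "((\<lambda>x. f x \<bullet> b) has_derivative (\<lambda>x. (x *\<^sub>R f') \<bullet> b)) (at t within S)"
    using assms[of i j] unfolding b has_field_derivative_def
    by (simp add: inner_axis e)
qed

lemma mexp_entry: "mexp (t *\<^sub>R M) $ i $ j = (\<Sum>k. (matpow (M::real^'n^'n) k $ i $ j / fact k) * t ^ k)"
proof -
  have bl: "bounded_linear (\<lambda>X::real^'n^'n. X $ i $ j)"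
    using bounded_linear_compose[OF bounded_linear_vec_nth[of j] bounded_linear_vec_nth[of i]]
    by (simp add: o_def)
  show ?thesis
    unfolding mexp_def bounded_linear.suminf[OF bl summable_mexp]
    by (simp add: matpow_scale mult.commute)
qed

lemma mexp_has_vector_derivative:
  "((\<lambda>t. mexp (t *\<^sub>R M)) has_vector_derivative (M ** mexp (t *\<^sub>R (M::real^'n^'n)))) (at t within S)"
proof (rule mat_has_vector_derivative_entries)
  fix i j
  define c where "c k = matpow M k $ i $ j / fact k" for k
  have sm: "summable (\<lambda>k. c k * y ^ k)" for y :: real
  proof (rule summable_comparison_test)
    show "\<exists>N. \<forall>n\<ge>N. norm (c n * y ^ n) \<le> norm (mat 1 :: real^'n^'n) * (inverse (fact n) * (norm M * \<bar>y\<bar>) ^ n)"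
    proof (intro exI[of _ 0] allI impI)
      fix n
      have "\<bar>matpow M n $ i $ j\<bar> \<le> norm (matpow M n $ i)"
        by (rule component_le_norm_cart)
      also have "\<dots> \<le> norm (matpow M n)"
        by (rule Finite_Cartesian_Product.norm_nth_le)
      also have "\<dots> \<le> norm (mat 1 :: real^'n^'n) * norm M ^ n" by (rule matpow_norm)
      finally have "\<bar>matpow M n $ i $ j\<bar> * \<bar>y\<bar>^n \<le> norm (mat 1 :: real^'n^'n) * norm M ^ n * \<bar>y\<bar>^n"
        by (intro mult_right_mono) auto
      have "norm (c n * y ^ n) = (\<bar>matpow M n $ i $ j\<bar> * \<bar>y\<bar>^n) / fact n"
        by (simp add: c_def abs_mult power_abs)
      also have "\<dots> \<le> (norm (mat 1 :: real^'n^'n) * norm M ^ n * \<bar>y\<bar>^n) / fact n"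
        by (rule divide_right_mono) (fact, simp)
      also have "\<dots> = norm (mat 1 :: real^'n^'n) * (inverse (fact n) * (norm M * \<bar>y\<bar>) ^ n)"
        by (simp add: power_mult_distrib divide_inverse)
      finally show "norm (c n * y ^ n) \<le> norm (mat 1 :: real^'n^'n) * (inverse (fact n) * (norm M * \<bar>y\<bar>) ^ n)" .
    qed
    show "summable (\<lambda>n. norm (mat 1 :: real^'n^'n) * (inverse (fact n) * (norm M * \<bar>y\<bar>) ^ n))"
      by (intro summable_mult summable_exp)
  qed
  have d: "((\<lambda>x. \<Sum>k. c k * x ^ k) has_real_derivative (\<Sum>k. diffs c k * t ^ k)) (at t)"
    by (rule termdiffs_strong_converges_everywhere[OF sm])
  have e1: "(\<lambda>t. mexp (t *\<^sub>R M) $ i $ j) = (\<lambda>x. \<Sum>k. c k * x ^ k)"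
    by (simp add: mexp_entry c_def)
  have e2: "(M ** mexp (t *\<^sub>R M)) $ i $ j = (\<Sum>k. diffs c k * t ^ k)"
  proof -
    have "M ** mexp (t *\<^sub>R M) = (\<Sum>k. M ** ((1 / fact k) *\<^sub>R matpow (t *\<^sub>R M) k))"
      unfolding mexp_def
      by (rule bounded_linear.suminf[OF bounded_bilinear.bounded_linear_right[OF bounded_bilinear_mm] summable_mexp])
    also have "\<dots> = (\<Sum>k. (t ^ k / fact k) *\<^sub>R matpow M (Suc k))"
      by (simp add: matpow_scale matrix_scalar_ac scalar_matrix_assoc[symmetric])
    finally have "(M ** mexp (t *\<^sub>R M)) $ i $ j = (\<Sum>k. (t ^ k / fact k) *\<^sub>R matpow M (Suc k)) $ i $ j"
      by simp
    also have "\<dots> = (\<Sum>k. ((t ^ k / fact k) *\<^sub>R matpow M (Suc k)) $ i $ j)"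
    proof -
      have bl: "bounded_linear (\<lambda>X::real^'n^'n. X $ i $ j)"
        using bounded_linear_compose[OF bounded_linear_vec_nth[of j] bounded_linear_vec_nth[of i]]
        by (simp add: o_def)
      have "summable (\<lambda>k. (t ^ k / fact k) *\<^sub>R matpow M (Suc k))"
      proof -
        have "summable (\<lambda>k. M ** ((1 / fact k) *\<^sub>R matpow (t *\<^sub>R M) k))"
          by (rule bounded_linear.summable[OF bounded_bilinear.bounded_linear_right[OF bounded_bilinear_mm] summable_mexp])
        then show ?thesis by (simp add: matpow_scale matrix_scalar_ac scalar_matrix_assoc[symmetric])
      qed
      from bounded_linear.suminf[OF bl this] show ?thesis by simp
    qed
    also have "\<dots> = (\<Sum>k. diffs c k * t ^ k)"
    proof (rule suminf_cong)
      fix k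
      have f: "real (Suc k) * (a / fact (Suc k)) = a / fact k" for a :: real
        by (simp add: fact_Suc)
      show "((t ^ k / fact k) *\<^sub>R matpow M (Suc k)) $ i $ j = diffs c k * t ^ k"
        unfolding diffs_def c_def f by simp
    qed
    finally show ?thesis .
  qed
  show "((\<lambda>t. mexp (t *\<^sub>R M) $ i $ j) has_real_derivative (M ** mexp (t *\<^sub>R M)) $ i $ j) (at t within S)"
    unfolding e1 e2 using d by (rule has_field_derivative_at_within)
qed

lemma gronwall_fwd:
  fixes u :: "real \<Rightarrow> 'v::real_inner"
  assumes d: "\<And>s. s \<in> {a..b} \<Longrightarrow> (u has_vector_derivative f s) (at s within {a..b})"
    and K: "\<And>s. s \<in> {a..b} \<Longrightarrow> norm (f s) \<le> K * norm (u s)"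
    and u0: "u a = 0" and t: "t \<in> {a..b}"
  shows "u t = 0"
proof -
  define g where "g s = exp (- (2*K) * s) * (u s \<bullet> u s)" for s
  define g' where "g' s = exp (- (2*K) * s) * (u s \<bullet> f s + f s \<bullet> u s) + (exp (- (2*K) * s) * (-(2*K))) * (u s \<bullet> u s)" for s
  have dg: "(g has_real_derivative g' s) (at s within {a..t})" if "s \<in> {a..t}" for s
  proof -
    have s: "s \<in> {a..b}" using that t by auto
    have du: "(u has_vector_derivative f s) (at s within {a..t})"
      using d[OF s] by (rule has_vector_derivative_within_subset) (use t in auto)
    have "((\<lambda>s. u s \<bullet> u s) has_vector_derivative (u s \<bullet> f s + f s \<bullet> u s)) (at s within {a..t})"
      by (rule bounded_bilinear.has_vector_derivative[OF bounded_bilinear_inner du du])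
    then have di: "((\<lambda>s. u s \<bullet> u s) has_real_derivative (u s \<bullet> f s + f s \<bullet> u s)) (at s within {a..t})"
      by (simp add: has_real_derivative_iff_has_vector_derivative)
    have de: "((\<lambda>s. exp (- (2*K) * s)) has_real_derivative exp (- (2*K) * s) * (-(2*K))) (at s within {a..t})"
      by (auto intro!: derivative_eq_intros)
    show ?thesis unfolding g_def g'_def
      using DERIV_mult[OF de di] by (simp add: algebra_simps)
  qed
  have g'_le: "g' s \<le> 0" if "s \<in> {a..b}" for s
  proof -
    have "u s \<bullet> f s \<le> norm (u s) * norm (f s)" by (rule norm_cauchy_schwarz)
    also have "\<dots> \<le> norm (u s) * (K * norm (u s))" by (rule mult_left_mono[OF K[OF that]]) simp
    finally have "u s \<bullet> f s \<le> K * (u s \<bullet> u s)"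
      by (simp add: power2_norm_eq_inner[symmetric] power2_eq_square mult_ac)
    then have "u s \<bullet> f s + f s \<bullet> u s - 2 * K * (u s \<bullet> u s) \<le> 0"
      by (simp add: inner_commute)
    then have "exp (- (2*K) * s) * (u s \<bullet> f s + f s \<bullet> u s - 2 * K * (u s \<bullet> u s)) \<le> 0"
      by (simp add: mult_nonneg_nonpos)
    then show ?thesis unfolding g'_def by (simp add: algebra_simps)
  qed
  have at: "a \<le> t" using t by auto
  obtain x where x: "x \<in> {a..t}" "g t - g a = g' x * (t - a)"
    using mvt_very_simple[of a t g "\<lambda>x. (*) (g' x)"] dg at unfolding has_field_derivative_def by auto
  have "g' x * (t - a) \<le> 0"
    using g'_le[of x] x(1) t at by (simp add: mult_nonpos_nonneg)
  then have "g t \<le> 0" using x u0 by (simp add: g_def)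
  then have "u t \<bullet> u t \<le> 0" unfolding g_def by (simp add: mult_le_0_iff)
  then show ?thesis by (metis antisym inner_ge_zero inner_eq_zero_iff)
qed

lemma gronwall_bwd:
  fixes u :: "real \<Rightarrow> 'v::real_inner"
  assumes d: "\<And>s. s \<in> {a..b} \<Longrightarrow> (u has_vector_derivative f s) (at s within {a..b})"
    and K: "\<And>s. s \<in> {a..b} \<Longrightarrow> norm (f s) \<le> K * norm (u s)"
    and u0: "u b = 0" and t: "t \<in> {a..b}"
  shows "u t = 0"
proof -
  define g where "g s = exp ((2*K) * s) * (u s \<bullet> u s)" for s
  define g' where "g' s = exp ((2*K) * s) * (u s \<bullet> f s + f s \<bullet> u s) + (exp ((2*K) * s) * (2*K)) * (u s \<bullet> u s)" for s
  have dg: "(g has_real_derivative g' s) (at s within {t..b})" if "s \<in> {t..b}" for s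
  proof -
    have s: "s \<in> {a..b}" using that t by auto
    have du: "(u has_vector_derivative f s) (at s within {t..b})"
      using d[OF s] by (rule has_vector_derivative_within_subset) (use t in auto)
    have "((\<lambda>s. u s \<bullet> u s) has_vector_derivative (u s \<bullet> f s + f s \<bullet> u s)) (at s within {t..b})"
      by (rule bounded_bilinear.has_vector_derivative[OF bounded_bilinear_inner du du])
    then have di: "((\<lambda>s. u s \<bullet> u s) has_real_derivative (u s \<bullet> f s + f s \<bullet> u s)) (at s within {t..b})"
      by (simp add: has_real_derivative_iff_has_vector_derivative)
    have de: "((\<lambda>s. exp ((2*K) * s)) has_real_derivative exp ((2*K) * s) * (2*K)) (at s within {t..b})"
      by (auto intro!: derivative_eq_intros)
    show ?thesis unfolding g_def g'_def
      using DERIV_mult[OF de di] by (simp add: algebra_simps)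
  qed
  have g'_ge: "g' s \<ge> 0" if "s \<in> {a..b}" for s
  proof -
    have "- (u s \<bullet> f s) \<le> norm (u s) * norm (f s)"
      using norm_cauchy_schwarz[of "u s" "- f s"] by simp
    also have "\<dots> \<le> norm (u s) * (K * norm (u s))" by (rule mult_left_mono[OF K[OF that]]) simp
    finally have "- (u s \<bullet> f s) \<le> K * (u s \<bullet> u s)"
      by (simp add: power2_norm_eq_inner[symmetric] power2_eq_square mult_ac)
    then have "u s \<bullet> f s + f s \<bullet> u s + 2 * K * (u s \<bullet> u s) \<ge> 0"
      by (simp add: inner_commute)
    then have "exp ((2*K) * s) * (u s \<bullet> f s + f s \<bullet> u s + 2 * K * (u s \<bullet> u s)) \<ge> 0"
      by simp
    then show ?thesis unfolding g'_def by (simp add: algebra_simps)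
  qed
  have tb: "t \<le> b" using t by auto
  obtain x where x: "x \<in> {t..b}" "g b - g t = g' x * (b - t)"
    using mvt_very_simple[of t b g "\<lambda>x. (*) (g' x)"] dg tb unfolding has_field_derivative_def by auto
  have "g' x * (b - t) \<ge> 0"
    using g'_ge[of x] x(1) t tb by simp
  then have "g t \<le> 0" using x u0 by (simp add: g_def)
  then have "u t \<bullet> u t \<le> 0" unfolding g_def by (simp add: mult_le_0_iff)
  then show ?thesis by (metis antisym inner_ge_zero inner_eq_zero_iff)
qed

lemma gronwall_zero:
  fixes u :: "real \<Rightarrow> 'v::real_inner"
  assumes d: "\<And>s. s \<in> {a..b} \<Longrightarrow> (u has_vector_derivative f s) (at s within {a..b})"
    and K: "\<And>s. s \<in> {a..b} \<Longrightarrow> norm (f s) \<le> K * norm (u s)"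
    and t0: "t0 \<in> {a..b}" and u0: "u t0 = 0" and t: "t \<in> {a..b}"
  shows "u t = 0"
proof (cases "t \<le> t0")
  case True
  show ?thesis
  proof (rule gronwall_bwd[of a t0 u f K])
    fix s assume s: "s \<in> {a..t0}"
    then have "s \<in> {a..b}" using t0 by auto
    then show "(u has_vector_derivative f s) (at s within {a..t0})"
      by (rule has_vector_derivative_within_subset[OF d]) (use t0 in auto)
    show "norm (f s) \<le> K * norm (u s)" using K \<open>s \<in> {a..b}\<close> by auto
  qed (use u0 t True in auto)
next
  case False
  show ?thesis
  proof (rule gronwall_fwd[of t0 b u f K])
    fix s assume s: "s \<in> {t0..b}"
    then have "s \<in> {a..b}" using t0 by auto
    then show "(u has_vector_derivative f s) (at s within {t0..b})"
      by (rule has_vector_derivative_within_subset[OF d]) (use t0 in auto)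
    show "norm (f s) \<le> K * norm (u s)" using K \<open>s \<in> {a..b}\<close> by auto
  qed (use u0 t False in auto)
qed

lemma cont_bound:
  assumes "continuous_on {a..b} (A :: real \<Rightarrow> 'v::real_normed_vector)"
  shows "\<exists>K. \<forall>t\<in>{a..b}. norm (A t) \<le> K"
proof -
  have "compact (A ` {a..b})" by (rule compact_continuous_image[OF assms compact_Icc])
  then have "bounded (A ` {a..b})" by (rule compact_imp_bounded)
  then show ?thesis by (auto simp: bounded_iff)
qed

lemma linode_unique:
  fixes u v :: "real \<Rightarrow> real^'n" and A :: "real \<Rightarrow> real^'n^'n"
  assumes cont: "continuous_on {a..b} A"
    and du: "\<And>s. s \<in> {a..b} \<Longrightarrow> (u has_vector_derivative A s *v u s) (at s within {a..b})"
    and dv: "\<And>s. s \<in> {a..b} \<Longrightarrow> (v has_vector_derivative A s *v v s) (at s within {a..b})"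
    and t0: "t0 \<in> {a..b}" and eq: "u t0 = v t0" and t: "t \<in> {a..b}"
  shows "u t = v t"
proof -
  obtain K where K: "\<And>s. s \<in> {a..b} \<Longrightarrow> norm (A s) \<le> K" using cont_bound[OF cont] by blast
  have "(\<lambda>s. u s - v s) t = 0"
  proof (rule gronwall_zero[where f="\<lambda>s. A s *v (u s - v s)" and K=K])
    fix s assume s: "s \<in> {a..b}"
    show "((\<lambda>s. u s - v s) has_vector_derivative A s *v (u s - v s)) (at s within {a..b})"
      using has_vector_derivative_diff[OF du[OF s] dv[OF s]] by (simp add: matrix_vector_mult_diff_distrib)
    have "norm (A s *v (u s - v s)) \<le> norm (A s) * norm (u s - v s)" by (rule norm_mv_le)
    also have "\<dots> \<le> K * norm (u s - v s)" by (rule mult_right_mono[OF K[OF s]]) simp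
    finally show "norm (A s *v (u s - v s)) \<le> K * norm (u s - v s)" .
  qed (use t0 eq t in auto)
  then show ?thesis by simp
qed

lemma mexp_affine_deriv:
  "((\<lambda>t. mexp ((\<alpha> * t + \<beta>) *\<^sub>R M)) has_vector_derivative (\<alpha> *\<^sub>R (M ** mexp ((\<alpha> * t + \<beta>) *\<^sub>R (M::real^'n^'n))))) (at t within S)"
proof -
  have f: "((\<lambda>t. \<alpha> * t + \<beta>) has_vector_derivative \<alpha>) (at t within S)"
    by (auto intro!: derivative_eq_intros simp: has_real_derivative_iff_has_vector_derivative[symmetric])
  from vector_diff_chain_within[OF f mexp_has_vector_derivative]
  show ?thesis by (simp add: o_def)
qed

lemma mexp_scale_deriv:
  "((\<lambda>t. mexp (t *\<^sub>R M)) has_vector_derivative (M ** mexp (t *\<^sub>R (M::real^'n^'n)))) (at t within S)"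
  by (rule mexp_has_vector_derivative)

lemma deriv_zero_const:
  fixes h :: "real \<Rightarrow> 'v::real_normed_vector"
  assumes "\<And>s. (h has_vector_derivative 0) (at s)"
  shows "h x = h y"
proof -
  have "\<exists>c. \<forall>x\<in>UNIV. h x = c"
    by (rule has_derivative_zero_constant[of UNIV h]) (use assms in \<open>auto simp: has_vector_derivative_def\<close>)
  then show ?thesis by auto
qed

lemma scale_commute: "M ** (s *\<^sub>R (M::real^'n^'n)) = (s *\<^sub>R M) ** M"
  by (simp add: matrix_scalar_ac scalar_matrix_assoc[symmetric])

lemma mexp_scale_commute: "M ** mexp (s *\<^sub>R (M::real^'n^'n)) = mexp (s *\<^sub>R M) ** M"
  by (rule mexp_commute[OF scale_commute])

lemma mexp_inv_left: "mexp (- M) ** mexp (M::real^'n^'n) = mat 1"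
proof -
  define h where "h s = mexp ((-s) *\<^sub>R M) ** mexp (s *\<^sub>R M)" for s
  have "(h has_vector_derivative 0) (at s)" for s
  proof -
    have d1: "((\<lambda>s. mexp ((-s) *\<^sub>R M)) has_vector_derivative ((-1) *\<^sub>R (M ** mexp ((-s) *\<^sub>R M)))) (at s)"
      using mexp_affine_deriv[where \<alpha>="-1" and t=s and \<beta>=0 and M=M and S=UNIV] by simp
    have "(h has_vector_derivative (mexp ((-s) *\<^sub>R M) ** (M ** mexp (s *\<^sub>R M)) + ((-1) *\<^sub>R (M ** mexp ((-s) *\<^sub>R M))) ** mexp (s *\<^sub>R M))) (at s)"
      unfolding h_def by (rule bounded_bilinear.has_vector_derivative[OF bounded_bilinear_mm d1 mexp_scale_deriv])
    moreover have "mexp ((-s) *\<^sub>R M) ** (M ** mexp (s *\<^sub>R M)) + ((-1) *\<^sub>R (M ** mexp ((-s) *\<^sub>R M))) ** mexp (s *\<^sub>R M) = 0"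
    proof -
      have c: "M ** mexp (- (s *\<^sub>R M)) = mexp (- (s *\<^sub>R M)) ** M"
        using mexp_scale_commute[of M "-s"] by simp
      show ?thesis by (simp add: c mm_uminus_left matrix_mul_assoc)
    qed
    ultimately show ?thesis by simp
  qed
  then have "h 1 = h 0" by (rule deriv_zero_const)
  then show ?thesis by (simp add: h_def mexp_zero)
qed

lemma mexp_inv_right: "mexp (M::real^'n^'n) ** mexp (- M) = mat 1"
  using mexp_inv_left[of "- M"] by simp

lemma mexp_add_scale: "mexp ((s + r) *\<^sub>R M) = mexp (s *\<^sub>R M) ** mexp (r *\<^sub>R (M::real^'n^'n))"
proof -
  define h where "h s = mexp ((-s) *\<^sub>R M) ** mexp ((s + r) *\<^sub>R M)" for s
  have "(h has_vector_derivative 0) (at s)" for s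
  proof -
    have d1: "((\<lambda>s. mexp ((-s) *\<^sub>R M)) has_vector_derivative ((-1) *\<^sub>R (M ** mexp ((-s) *\<^sub>R M)))) (at s)"
      using mexp_affine_deriv[where \<alpha>="-1" and t=s and \<beta>=0 and M=M and S=UNIV] by simp
    have d2: "((\<lambda>s. mexp ((s + r) *\<^sub>R M)) has_vector_derivative (M ** mexp ((s + r) *\<^sub>R M))) (at s)"
      using mexp_affine_deriv[where \<alpha>=1 and t=s and \<beta>=r and M=M and S=UNIV] by simp
    have "(h has_vector_derivative (mexp ((-s) *\<^sub>R M) ** (M ** mexp ((s + r) *\<^sub>R M)) + ((-1) *\<^sub>R (M ** mexp ((-s) *\<^sub>R M))) ** mexp ((s + r) *\<^sub>R M))) (at s)"
      unfolding h_def by (rule bounded_bilinear.has_vector_derivative[OF bounded_bilinear_mm d1 d2])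
    moreover have "mexp ((-s) *\<^sub>R M) ** (M ** mexp ((s + r) *\<^sub>R M)) + ((-1) *\<^sub>R (M ** mexp ((-s) *\<^sub>R M))) ** mexp ((s + r) *\<^sub>R M) = 0"
    proof -
      have c: "M ** mexp (- (s *\<^sub>R M)) = mexp (- (s *\<^sub>R M)) ** M"
        using mexp_scale_commute[of M "-s"] by simp
      show ?thesis by (simp add: c mm_uminus_left matrix_mul_assoc)
    qed
    ultimately show ?thesis by simp
  qed
  then have "h s = h 0" by (rule deriv_zero_const)
  then have e: "mexp ((-s) *\<^sub>R M) ** mexp ((s + r) *\<^sub>R M) = mexp (r *\<^sub>R M)"
    by (simp add: h_def mexp_zero)
  have "mexp ((s + r) *\<^sub>R M) = (mexp (s *\<^sub>R M) ** mexp ((-s) *\<^sub>R M)) ** mexp ((s + r) *\<^sub>R M)"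
    using mexp_inv_right[of "s *\<^sub>R M"] by simp
  also have "\<dots> = mexp (s *\<^sub>R M) ** mexp (r *\<^sub>R M)"
    using e by (simp add: matrix_mul_assoc[symmetric])
  finally show ?thesis .
qed

lemma mexp_commute_mexp:
  assumes "N ** M = M ** (N::real^'n^'n)"
  shows "mexp N ** mexp M = mexp M ** mexp N"
proof -
  have "N ** mexp M = mexp M ** N" by (rule mexp_commute[OF assms])
  then have "mexp M ** N = N ** mexp M" by simp
  then show ?thesis by (rule mexp_commute[symmetric])
qed

lemma outer_mv_vec: "outer x d *v v = (d \<bullet> v) *\<^sub>R (x::real^'n)"
  by (simp add: outer_def matrix_vector_mult_def inner_vec_def vec_eq_iff sum_distrib_left mult_ac)

lemma outer_left_mv: "outer (L *v x) d = (L::real^'n^'n) ** outer x d"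
  by (simp add: outer_def matrix_vector_mult_def matrix_matrix_mult_def vec_eq_iff sum_distrib_right sum_distrib_left mult_ac)

lemma outer_add_left: "outer (a + b) c = outer a c + outer (b::real^'n) c"
  by (simp add: outer_def vec_eq_iff algebra_simps)

lemma outer_add_right: "outer c (a + b) = outer c a + outer (c::real^'n) b"
  by (simp add: outer_def vec_eq_iff algebra_simps)

lemma outer_transpose: "transpose (outer a b) = outer (b::real^'n) a"
  by (simp add: outer_def transpose_def vec_eq_iff mult.commute)

lemma outer_mv: "outer (P *v u) (S *v w) = (P::real^'n^'n) ** outer u w ** transpose (S::real^'n^'n)"
proof -
  have "outer u (S *v w) = transpose (outer (S *v w) u)" by (simp add: outer_transpose)
  also have "\<dots> = outer u w ** transpose S"
    by (simp add: outer_left_mv matrix_transpose_mul outer_transpose)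
  finally show ?thesis by (simp add: outer_left_mv matrix_mul_assoc)
qed

lemma norm_outer: "norm (outer x y) = norm (x::real^'n) * norm y"
proof -
  have "(norm (outer x y))^2 = (norm x * norm y)^2"
    unfolding norm_sq_vec[of "outer x y"] power_mult_distrib norm_sq_vec[of x] sum_distrib_right
  proof (rule sum.cong[OF refl])
    fix i
    have "outer x y $ i = x $ i *\<^sub>R y" by (simp add: outer_def vec_eq_iff)
    then show "(norm (outer x y $ i))^2 = (norm (x $ i))^2 * (norm y)^2"
      by (simp add: power_mult_distrib)
  qed
  then show ?thesis by (simp add: power2_eq_iff_nonneg)
qed

lemma bounded_linear_outer_left: "bounded_linear (\<lambda>x. outer (x::real^'n) d)"
proof (rule bounded_linear_intro[where K="norm d"])
  show "outer (x + y) d = outer x d + outer y d" for x y by (rule outer_add_left)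
  show "outer (r *\<^sub>R x) d = r *\<^sub>R outer x d" for r x by (simp add: outer_def vec_eq_iff)
  show "norm (outer x d) \<le> norm x * norm d" for x by (simp add: norm_outer)
qed

lemma linear_functional_inner:
  fixes g :: "'v::euclidean_space \<Rightarrow> real"
  assumes "linear g"
  shows "g v = (\<Sum>i\<in>Basis. g i *\<^sub>R i) \<bullet> v"
proof -
  have "g v = g (\<Sum>i\<in>Basis. (v \<bullet> i) *\<^sub>R i)" by (simp add: euclidean_representation)
  also have "\<dots> = (\<Sum>i\<in>Basis. (v \<bullet> i) * g i)"
    by (simp add: real_vector.linear_sum[OF assms] real_vector.linear_scale[OF assms])
  also have "\<dots> = (\<Sum>i\<in>Basis. g i * (i \<bullet> v))"
    by (rule sum.cong[OF refl]) (simp add: inner_commute mult.commute)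
  also have "\<dots> = (\<Sum>i\<in>Basis. g i *\<^sub>R i) \<bullet> v"
    by (simp add: inner_sum_left)
  finally show ?thesis .
qed

lemma fundamental_matrix:
  fixes xs :: "'a \<Rightarrow> real \<Rightarrow> real^'n" and L :: "real \<Rightarrow> real^'n^'n"
  assumes cont: "continuous_on {a..b} L"
    and sol: "\<And>\<omega> t. \<omega> \<in> S \<Longrightarrow> t \<in> {a..b} \<Longrightarrow> (xs \<omega> has_vector_derivative L t *v xs \<omega> t) (at t within {a..b})"
    and t0: "t0 \<in> {a..b}"
  shows "\<exists>\<Phi>. (\<forall>t\<in>{a..b}. (\<Phi> has_vector_derivative L t ** \<Phi> t) (at t within {a..b}))
            \<and> (\<forall>\<omega>\<in>S. \<forall>t\<in>{a..b}. xs \<omega> t = \<Phi> t *v xs \<omega> t0)"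
proof -
  define V where "V = (\<lambda>\<omega>. xs \<omega> t0) ` S"
  obtain B where BV: "B \<subseteq> V" and indB: "independent B" and VB: "V \<subseteq> span B"
    by (rule real_vector.maximal_independent_subset)
  have finB: "finite B" using independent_bound[OF indB] by simp
  have "\<forall>c\<in>B. \<exists>g. linear g \<and> (\<forall>x\<in>B. g x = (if x = c then 1 else (0::real)))"
  proof
    fix c assume "c \<in> B"
    show "\<exists>g. linear g \<and> (\<forall>x\<in>B. g x = (if x = c then 1 else (0::real)))"
      by (rule real_vector.linear_independent_extend[OF indB, of "\<lambda>x. if x = c then 1 else (0::real)"])
  qed
  from bchoice[OF this] obtain G where G0: "\<forall>c\<in>B. linear (G c) \<and> (\<forall>x\<in>B. G c x = (if x = c then 1 else (0::real)))"
    by blast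
  have G: "\<And>c. c \<in> B \<Longrightarrow> linear (G c)"
      "\<And>c x. c \<in> B \<Longrightarrow> x \<in> B \<Longrightarrow> G c x = (if x = c then 1 else 0)"
    using G0 by auto
  have "\<forall>c\<in>B. \<exists>\<omega>. \<omega> \<in> S \<and> xs \<omega> t0 = c" using BV unfolding V_def by blast
  from bchoice[OF this] obtain w where w0: "\<forall>c\<in>B. w c \<in> S \<and> xs (w c) t0 = c"
    by blast
  have w: "\<And>c. c \<in> B \<Longrightarrow> w c \<in> S" "\<And>c. c \<in> B \<Longrightarrow> xs (w c) t0 = c"
    using w0 by auto
  define d where "d c = (\<Sum>i\<in>Basis. G c i *\<^sub>R i)" for c
  have Gd: "G c v = d c \<bullet> v" if "c \<in> B" for c v
    unfolding d_def by (rule linear_functional_inner[OF G(1)[OF that]])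
  define \<Phi> where "\<Phi> t = (\<Sum>c\<in>B. outer (xs (w c) t) (d c))" for t
  have dPhi: "(\<Phi> has_vector_derivative L t ** \<Phi> t) (at t within {a..b})" if t: "t \<in> {a..b}" for t
  proof -
    have "(\<Phi> has_vector_derivative (\<Sum>c\<in>B. outer (L t *v xs (w c) t) (d c))) (at t within {a..b})"
      unfolding \<Phi>_def
      by (rule has_vector_derivative_sum,
          rule bounded_linear.has_vector_derivative[OF bounded_linear_outer_left sol[OF w(1) t]])
    moreover have "(\<Sum>c\<in>B. outer (L t *v xs (w c) t) (d c)) = L t ** \<Phi> t"
      unfolding \<Phi>_def outer_left_mv
      using real_vector.linear_sum[OF bounded_linear.linear[OF bounded_bilinear.bounded_linear_right[OF bounded_bilinear_mm, of "L t"]], where g="\<lambda>c. outer (xs (w c) t) (d c)" and S=B]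
      by (simp add: eq_commute)
    ultimately show ?thesis by simp
  qed
  have main: "xs \<omega> t = \<Phi> t *v xs \<omega> t0" if \<omega>: "\<omega> \<in> S" and t: "t \<in> {a..b}" for \<omega> t
  proof -
    define v where "v = xs \<omega> t0"
    have vspan: "v \<in> span B" using VB \<omega> unfolding V_def v_def by blast
    have Phiv: "\<Phi> s *v v = (\<Sum>c\<in>B. (d c \<bullet> v) *\<^sub>R xs (w c) s)" for s
    proof -
      have "\<Phi> s *v v = (\<Sum>c\<in>B. outer (xs (w c) s) (d c) *v v)"
        unfolding \<Phi>_def
        using real_vector.linear_sum[OF bounded_linear.linear[OF bounded_bilinear.bounded_linear_left[OF bounded_bilinear_mv]], where g="\<lambda>c. outer (xs (w c) s) (d c)" and S=B]
        by simp
      then show ?thesis by (simp add: outer_mv_vec)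
    qed
    have lin: "linear (\<lambda>v. \<Sum>c\<in>B. G c v *\<^sub>R c)"
    proof (rule linearI)
      show "(\<Sum>c\<in>B. G c (x + y) *\<^sub>R c) = (\<Sum>c\<in>B. G c x *\<^sub>R c) + (\<Sum>c\<in>B. G c y *\<^sub>R c)" for x y
        by (simp add: real_vector.linear_add[OF G(1)] scaleR_add_left sum.distrib cong: sum.cong)
      show "(\<Sum>c\<in>B. G c (r *\<^sub>R x) *\<^sub>R c) = r *\<^sub>R (\<Sum>c\<in>B. G c x *\<^sub>R c)" for r x
        by (simp add: real_vector.linear_scale[OF G(1)] scaleR_sum_right cong: sum.cong)
    qed
    have onB: "(\<Sum>c\<in>B. G c x *\<^sub>R c) = id x" if "x \<in> B" for x
    proof -
      have "(\<Sum>c\<in>B. G c x *\<^sub>R c) = (\<Sum>c\<in>B. (if x = c then x else 0))"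
        by (rule sum.cong[OF refl]) (simp add: G(2) that)
      also have "\<dots> = x" using finB that by simp
      finally show ?thesis by simp
    qed
    have init: "\<Phi> t0 *v v = v"
    proof -
      have "\<Phi> t0 *v v = (\<Sum>c\<in>B. G c v *\<^sub>R c)"
        unfolding Phiv by (rule sum.cong[OF refl]) (simp add: Gd w(2))
      also have "\<dots> = id v"
        by (rule real_vector.linear_eq_on_span[OF lin real_vector.linear_id onB vspan])
      finally show ?thesis by simp
    qed
    have du: "((\<lambda>s. \<Phi> s *v v) has_vector_derivative L s *v (\<Phi> s *v v)) (at s within {a..b})"
      if s: "s \<in> {a..b}" for s
      using bounded_linear.has_vector_derivative[OF bounded_bilinear.bounded_linear_left[OF bounded_bilinear_mv] dPhi[OF s], of v]
      by (simp add: matrix_vector_mul_assoc)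
    show ?thesis
      using linode_unique[OF cont sol[OF \<omega>] du t0 _ t] init v_def by simp
  qed
  show ?thesis using dPhi main by blast
qed

lemma trace_outer: "trace (outer v v) = (norm (v::real^'n))^2"
  unfolding norm_sq_vec by (simp add: trace_def outer_def power2_eq_square)

lemma bounded_linear_trace: "bounded_linear (trace :: real^'n^'n \<Rightarrow> real)"
proof (rule bounded_linear_intro[where K="real CARD('n)"])
  show "trace (x + y) = trace x + trace y" for x y :: "real^'n^'n" by (rule trace_add)
  show "trace (r *\<^sub>R x) = r *\<^sub>R trace x" for r and x :: "real^'n^'n"
    by (simp add: trace_def sum_distrib_left)
  show "norm (trace x) \<le> norm x * real CARD('n)" for x :: "real^'n^'n"
  proof -
    have "norm (trace x) \<le> (\<Sum>i\<in>UNIV. \<bar>x $ i $ i\<bar>)"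
      unfolding trace_def real_norm_def by (rule sum_abs)
    also have "\<dots> \<le> (\<Sum>i\<in>(UNIV::'n set). norm x)"
    proof (rule sum_mono)
      fix i
      have "\<bar>x $ i $ i\<bar> \<le> norm (x $ i)" by (rule component_le_norm_cart)
      also have "\<dots> \<le> norm x" by (rule Finite_Cartesian_Product.norm_nth_le)
      finally show "\<bar>x $ i $ i\<bar> \<le> norm x" .
    qed
    finally show ?thesis by (simp add: mult.commute)
  qed
qed

lemma transpose_uminus: "transpose (- (A::real^'n^'m)) = - transpose A"
  by (simp add: transpose_def vec_eq_iff)

lemma bounded_linear_mm_both: "bounded_linear (\<lambda>F. (P::real^'n^'n) ** F ** (Q::real^'n^'n))"
proof -
  have "bounded_linear (\<lambda>F. (\<lambda>G. G ** Q) ((\<lambda>F. P ** F) F))"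
    by (rule bounded_linear_compose[OF bounded_bilinear.bounded_linear_left[OF bounded_bilinear_mm]
          bounded_bilinear.bounded_linear_right[OF bounded_bilinear_mm]])
  then show ?thesis by simp
qed

lemma measurable_outer:
  assumes "f \<in> borel_measurable M" "g \<in> borel_measurable M"
  shows "(\<lambda>\<omega>. outer (f \<omega>) (g \<omega> :: real^'n)) \<in> borel_measurable M"
proof (rule borel_measurable_continuous_Pair[OF assms])
  show "continuous_on UNIV (\<lambda>x. outer (fst x) (snd x :: real^'n))"
    unfolding outer_def by (intro continuous_intros)
qed

lemma measurable_mv:
  assumes "f \<in> borel_measurable M"
  shows "(\<lambda>\<omega>. (P::real^'n^'m) *v f \<omega>) \<in> borel_measurable M"
  by (rule borel_measurable_continuous_on[OF _ assms])
     (intro linear_continuous_on matrix_vector_mul_bounded_linear)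

context
  fixes M :: "'a measure" and X0 xi :: "'a \<Rightarrow> real^'n"
  assumes P: "prob_space M"
    and mX: "X0 \<in> borel_measurable M" and iX: "integrable M (\<lambda>\<omega>. (norm (X0 \<omega>))\<^sup>2)"
    and mxi: "xi \<in> borel_measurable M" and ixi: "integrable M (\<lambda>\<omega>. (norm (xi \<omega>))\<^sup>2)"
    and m0: "integral\<^sup>L M xi = 0"
    and ind: "prob_space.indep_var M borel X0 borel xi"
begin

lemma integrable_outer_gen:
  assumes mf: "f \<in> borel_measurable M" and if2: "integrable M (\<lambda>\<omega>. (norm (f \<omega>))\<^sup>2)"
    and mg: "g \<in> borel_measurable M" and ig2: "integrable M (\<lambda>\<omega>. (norm (g \<omega>))\<^sup>2)"
  shows "integrable M (\<lambda>\<omega>. outer (f \<omega>) (g \<omega> :: real^'n))"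
proof (rule Bochner_Integration.integrable_bound[OF Bochner_Integration.integrable_add[OF if2 ig2]])
  show "(\<lambda>\<omega>. outer (f \<omega>) (g \<omega>)) \<in> borel_measurable M" by (rule measurable_outer[OF mf mg])
  show "AE x in M. norm (outer (f x) (g x)) \<le> norm ((norm (f x))\<^sup>2 + (norm (g x))\<^sup>2)"
  proof (rule AE_I2)
    fix x
    have "norm (f x) * norm (g x) \<le> (norm (f x))\<^sup>2 + (norm (g x))\<^sup>2"
    proof -
      have a: "2 * norm (f x) * norm (g x) \<le> (norm (f x))\<^sup>2 + (norm (g x))\<^sup>2" by (rule sum_squares_bound)
      have b: "0 \<le> norm (f x) * norm (g x)" by simp
      show ?thesis using a b by linarith
    qed
    then show "norm (outer (f x) (g x)) \<le> norm ((norm (f x))\<^sup>2 + (norm (g x))\<^sup>2)"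
      by (simp add: norm_outer)
  qed
qed

lemma integrable_L1:
  assumes mf: "f \<in> borel_measurable M" and if2: "integrable M (\<lambda>\<omega>. (norm (f \<omega>))\<^sup>2)"
  shows "integrable M (f :: 'a \<Rightarrow> real^'n)"
proof (rule Bochner_Integration.integrable_bound[OF Bochner_Integration.integrable_add[OF if2 finite_measure.integrable_const]])
  show "finite_measure M" using P by (simp add: prob_space_def)
  show "f \<in> borel_measurable M" by (rule mf)
  show "AE x in M. norm (f x) \<le> norm ((norm (f x))\<^sup>2 + (1::real))"
  proof (rule AE_I2)
    fix x
    have "norm (f x) \<le> (norm (f x))\<^sup>2 + 1"
    proof -
      have a: "2 * norm (f x) * 1 \<le> (norm (f x))\<^sup>2 + 1\<^sup>2" by (rule sum_squares_bound)
      then have a: "2 * norm (f x) \<le> (norm (f x))\<^sup>2 + 1" by simp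
      have b: "0 \<le> norm (f x)" by simp
      show ?thesis using a b by linarith
    qed
    then show "norm (f x) \<le> norm ((norm (f x))\<^sup>2 + (1::real))" by simp
  qed
qed

lemma iXX: "integrable M (\<lambda>\<omega>. outer (X0 \<omega>) (X0 \<omega>))"
  by (rule integrable_outer_gen[OF mX iX mX iX])
lemma iXxi: "integrable M (\<lambda>\<omega>. outer (X0 \<omega>) (xi \<omega>))"
  by (rule integrable_outer_gen[OF mX iX mxi ixi])
lemma ixiX: "integrable M (\<lambda>\<omega>. outer (xi \<omega>) (X0 \<omega>))"
  by (rule integrable_outer_gen[OF mxi ixi mX iX])
lemma ixixi: "integrable M (\<lambda>\<omega>. outer (xi \<omega>) (xi \<omega>))"
  by (rule integrable_outer_gen[OF mxi ixi mxi ixi])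

lemma bl_entry: "bounded_linear (\<lambda>X::real^'n^'n. X $ i $ j)"
  using bounded_linear_compose[OF bounded_linear_vec_nth[of j] bounded_linear_vec_nth[of i]]
  by (simp add: o_def)

lemma meas_nth: "(\<lambda>v::real^'n. v $ i) \<in> borel_measurable borel"
  by (intro borel_measurable_continuous_onI) (intro continuous_intros)

lemma int_xiX_zero: "integral\<^sup>L M (\<lambda>\<omega>. outer (xi \<omega>) (X0 \<omega>)) = 0"
proof -
  interpret prob_space M by (rule P)
  have ixi1: "integrable M xi" by (rule integrable_L1[OF mxi ixi])
  have iX1: "integrable M X0" by (rule integrable_L1[OF mX iX])
  have "integral\<^sup>L M (\<lambda>\<omega>. outer (xi \<omega>) (X0 \<omega>)) $ i $ j = 0" for i j
  proof -
    have "integral\<^sup>L M (\<lambda>\<omega>. outer (xi \<omega>) (X0 \<omega>)) $ i $ j = integral\<^sup>L M (\<lambda>\<omega>. outer (xi \<omega>) (X0 \<omega>) $ i $ j)"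
      using integral_bounded_linear[OF bl_entry ixiX, of i j] by simp
    also have "\<dots> = integral\<^sup>L M (\<lambda>\<omega>. X0 \<omega> $ j * xi \<omega> $ i)"
      by (simp add: outer_def mult.commute)
    also have "\<dots> = integral\<^sup>L M (\<lambda>\<omega>. X0 \<omega> $ j) * integral\<^sup>L M (\<lambda>\<omega>. xi \<omega> $ i)"
    proof (rule indep_var_lebesgue_integral)
      show "indep_var borel (\<lambda>\<omega>. X0 \<omega> $ j) borel (\<lambda>\<omega>. xi \<omega> $ i)"
        using indep_var_compose[OF ind meas_nth meas_nth, of j i] by (simp add: o_def)
      show "integrable M (\<lambda>\<omega>. X0 \<omega> $ j)"
        by (rule integrable_bounded_linear[OF bounded_linear_vec_nth iX1])
      show "integrable M (\<lambda>\<omega>. xi \<omega> $ i)"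
        by (rule integrable_bounded_linear[OF bounded_linear_vec_nth ixi1])
    qed
    also have "integral\<^sup>L M (\<lambda>\<omega>. xi \<omega> $ i) = 0"
      using integral_bounded_linear[OF bounded_linear_vec_nth ixi1, of i] m0 by simp
    finally show ?thesis by simp
  qed
  then show ?thesis by (simp add: vec_eq_iff)
qed

lemma int_Xxi_zero: "integral\<^sup>L M (\<lambda>\<omega>. outer (X0 \<omega>) (xi \<omega>)) = 0"
proof -
  have "integral\<^sup>L M (\<lambda>\<omega>. outer (X0 \<omega>) (xi \<omega>)) = integral\<^sup>L M (\<lambda>\<omega>. transpose (outer (xi \<omega>) (X0 \<omega>)))"
    by (simp add: outer_transpose)
  also have "\<dots> = transpose (integral\<^sup>L M (\<lambda>\<omega>. outer (xi \<omega>) (X0 \<omega>)))"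
    by (rule integral_bounded_linear[OF bounded_linear_transpose ixiX])
  also have "\<dots> = 0" by (simp add: int_xiX_zero transpose_def vec_eq_iff)
  finally show ?thesis .
qed

lemma int_term:
  fixes F :: "'a \<Rightarrow> real^'n^'n" and P S :: "real^'n^'n"
  assumes "integrable M F"
  shows "integrable M (\<lambda>\<omega>. (P::real^'n^'n) ** F \<omega> ** transpose S)"
    and "integral\<^sup>L M (\<lambda>\<omega>. P ** F \<omega> ** transpose S) = P ** integral\<^sup>L M F ** transpose S"
  using integrable_bounded_linear[OF bounded_linear_mm_both[of P "transpose S"] assms]
    integral_bounded_linear[OF bounded_linear_mm_both[of P "transpose S"] assms]
  by auto

lemma int_lin:
  fixes P Q S U :: "real^'n^'n"
  shows "integrable M (\<lambda>\<omega>. outer (P *v X0 \<omega> + Q *v xi \<omega>) (S *v X0 \<omega> + U *v xi \<omega>))"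
    and "integral\<^sup>L M (\<lambda>\<omega>. outer (P *v X0 \<omega> + Q *v xi \<omega>) (S *v X0 \<omega> + U *v xi \<omega>))
       = P ** integral\<^sup>L M (\<lambda>\<omega>. outer (X0 \<omega>) (X0 \<omega>)) ** transpose S
         + Q ** integral\<^sup>L M (\<lambda>\<omega>. outer (xi \<omega>) (xi \<omega>)) ** transpose U"
proof -
  have e: "outer (P *v X0 \<omega> + Q *v xi \<omega>) (S *v X0 \<omega> + U *v xi \<omega>) =
      (P ** outer (X0 \<omega>) (X0 \<omega>) ** transpose S + P ** outer (X0 \<omega>) (xi \<omega>) ** transpose U)
      + (Q ** outer (xi \<omega>) (X0 \<omega>) ** transpose S + Q ** outer (xi \<omega>) (xi \<omega>) ** transpose U)" for \<omega>
    by (simp add: outer_add_left outer_add_right outer_mv)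
  note i1 = int_term[OF iXX, of P S] and i2 = int_term[OF iXxi, of P U]
    and i3 = int_term[OF ixiX, of Q S] and i4 = int_term[OF ixixi, of Q U]
  show "integrable M (\<lambda>\<omega>. outer (P *v X0 \<omega> + Q *v xi \<omega>) (S *v X0 \<omega> + U *v xi \<omega>))"
    unfolding e by (intro Bochner_Integration.integrable_add i1 i2 i3 i4)
  show "integral\<^sup>L M (\<lambda>\<omega>. outer (P *v X0 \<omega> + Q *v xi \<omega>) (S *v X0 \<omega> + U *v xi \<omega>))
       = P ** integral\<^sup>L M (\<lambda>\<omega>. outer (X0 \<omega>) (X0 \<omega>)) ** transpose S
         + Q ** integral\<^sup>L M (\<lambda>\<omega>. outer (xi \<omega>) (xi \<omega>)) ** transpose U"
    unfolding e
    by (simp add: Bochner_Integration.integral_add Bochner_Integration.integrable_add i1 i2 i3 i4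
        int_Xxi_zero int_xiX_zero)
qed

lemma int_cost:
  fixes B :: "real^'n^'n"
  shows "integral\<^sup>L M (\<lambda>\<omega>. (norm (B *v X0 \<omega> - xi \<omega>))\<^sup>2)
     = trace (transpose B ** B ** integral\<^sup>L M (\<lambda>\<omega>. outer (X0 \<omega>) (X0 \<omega>)))
       + integral\<^sup>L M (\<lambda>\<omega>. (norm (xi \<omega>))\<^sup>2)"
proof -
  let ?S = "integral\<^sup>L M (\<lambda>\<omega>. outer (X0 \<omega>) (X0 \<omega>))"
  let ?X = "integral\<^sup>L M (\<lambda>\<omega>. outer (xi \<omega>) (xi \<omega>))"
  have v: "B *v X0 \<omega> - xi \<omega> = B *v X0 \<omega> + (- mat 1) *v xi \<omega>" for \<omega>
    by (simp add: matrix_vector_mult_def mat_def vec_eq_iff if_distrib if_distribR sum.delta' cong: if_cong)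
  have "integral\<^sup>L M (\<lambda>\<omega>. (norm (B *v X0 \<omega> - xi \<omega>))\<^sup>2)
      = integral\<^sup>L M (\<lambda>\<omega>. trace (outer (B *v X0 \<omega> + (- mat 1) *v xi \<omega>) (B *v X0 \<omega> + (- mat 1) *v xi \<omega>)))"
    by (simp add: trace_outer v)
  also have "\<dots> = trace (integral\<^sup>L M (\<lambda>\<omega>. outer (B *v X0 \<omega> + (- mat 1) *v xi \<omega>) (B *v X0 \<omega> + (- mat 1) *v xi \<omega>)))"
    by (rule integral_bounded_linear[OF bounded_linear_trace int_lin(1)])
  also have "\<dots> = trace (B ** ?S ** transpose B) + trace ?X"
    unfolding int_lin(2) by (simp add: trace_add mm_uminus_left mm_uminus_right transpose_uminus)
  also have "trace ?X = integral\<^sup>L M (\<lambda>\<omega>. (norm (xi \<omega>))\<^sup>2)"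
    using integral_bounded_linear[OF bounded_linear_trace ixixi] by (simp add: trace_outer)
  also have "trace (B ** ?S ** transpose B) = trace (transpose B ** B ** ?S)"
    by (metis matrix_mul_assoc trace_mul_sym)
  finally show ?thesis .
qed

end

lemma skew_transpose: "transpose (skew_part C) = - skew_part (C::real^'n^'n)"
  by (auto simp: skew_part_def transpose_def vec_eq_iff field_simps)

lemma skew_2: "2 *\<^sub>R skew_part C = C - transpose (C::real^'n^'n)"
  by (simp add: skew_part_def)

lemma mexp_skew_transpose: "transpose (mexp (a *\<^sub>R skew_part C)) = mexp (- (a *\<^sub>R skew_part (C::real^'n^'n)))"
  by (simp add: mexp_transpose transpose_scaleR skew_transpose)

lemma mexp_skew_transpose': "transpose (mexp (- (a *\<^sub>R skew_part C))) = mexp (a *\<^sub>R skew_part (C::real^'n^'n))"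
  using mexp_skew_transpose[of "-a" C] by simp

lemma mexp_scale_transpose: "transpose (mexp (a *\<^sub>R C)) = mexp (a *\<^sub>R transpose (C::real^'n^'n))"
  by (simp add: mexp_transpose transpose_scaleR)

lemma Fmat_transpose: "transpose (Fmat T C) = mexp (T *\<^sub>R C) ** mexp (- ((2 * T) *\<^sub>R skew_part (C::real^'n^'n)))"
  unfolding Fmat_def by (simp add: matrix_transpose_mul mexp_skew_transpose mexp_scale_transpose skew_transpose)

lemma mexp_minus_commute: "M ** mexp (- (s *\<^sub>R M)) = mexp (- (s *\<^sub>R M)) ** (M::real^'n^'n)"
  using mexp_scale_commute[of M "-s"] by simp

lemma deriv_E: "((\<lambda>t. mexp ((2 * t) *\<^sub>R M)) has_vector_derivative 2 *\<^sub>R (M ** mexp ((2 * t) *\<^sub>R (M::real^'n^'n)))) (at t within S)"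
  using mexp_affine_deriv[where \<alpha>=2 and \<beta>=0 and M=M and t=t and S=S] by simp

lemma deriv_Ei: "((\<lambda>t. mexp (- ((2 * t) *\<^sub>R M))) has_vector_derivative - (2 *\<^sub>R (M ** mexp (- ((2 * t) *\<^sub>R (M::real^'n^'n)))))) (at t within S)"
  using mexp_affine_deriv[where \<alpha>="-2" and \<beta>=0 and M=M and t=t and S=S] by simp

lemma deriv_H: "((\<lambda>t. mexp ((T - t) *\<^sub>R M)) has_vector_derivative - (M ** mexp ((T - t) *\<^sub>R (M::real^'n^'n)))) (at t within S)"
  using mexp_affine_deriv[where \<alpha>="-1" and \<beta>=T and M=M and t=t and S=S] by (simp add: algebra_simps)

definition At :: "real^'n^'n \<Rightarrow> real \<Rightarrow> real^'n^'n" where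
  "At C t = mexp ((2 * t) *\<^sub>R skew_part C) ** C ** mexp (- (2 * t) *\<^sub>R skew_part C)"

lemma At_alt: "At C t = mexp ((2 * t) *\<^sub>R skew_part C) ** C ** mexp (- ((2 * t) *\<^sub>R skew_part C))"
  by (simp add: At_def)

lemma At_0: "At C 0 = C"
  by (simp add: At_def mexp_zero)

lemma At_transpose: "transpose (At C t) = mexp ((2 * t) *\<^sub>R skew_part C) ** transpose C ** mexp (- ((2 * t) *\<^sub>R skew_part C))"
  by (simp add: At_alt matrix_transpose_mul mexp_skew_transpose mexp_skew_transpose' matrix_mul_assoc)

lemma deriv_At: "(At C has_vector_derivative (2 *\<^sub>R (skew_part C ** At C t) - 2 *\<^sub>R (At C t ** skew_part C))) (at t within S)"
proof -
  let ?O = "skew_part C"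
  let ?E = "mexp ((2 * t) *\<^sub>R ?O)" and ?Ei = "mexp (- ((2 * t) *\<^sub>R ?O))"
  have d1: "((\<lambda>t. mexp ((2 * t) *\<^sub>R ?O) ** C) has_vector_derivative (2 *\<^sub>R (?O ** ?E)) ** C) (at t within S)"
    using bounded_linear.has_vector_derivative[OF bounded_bilinear.bounded_linear_left[OF bounded_bilinear_mm, of C] deriv_E[of ?O t S]]
    by simp
  have "(At C has_vector_derivative ((?E ** C) ** (- (2 *\<^sub>R (?O ** ?Ei))) + ((2 *\<^sub>R (?O ** ?E)) ** C) ** ?Ei)) (at t within S)"
    unfolding At_alt[abs_def]
    by (rule bounded_bilinear.has_vector_derivative[OF bounded_bilinear_mm d1 deriv_Ei])
  moreover have "(?E ** C) ** (- (2 *\<^sub>R (?O ** ?Ei))) + ((2 *\<^sub>R (?O ** ?E)) ** C) ** ?Ei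
      = 2 *\<^sub>R (?O ** At C t) - 2 *\<^sub>R (At C t ** ?O)"
  proof -
    have c: "?O ** ?Ei = ?Ei ** ?O"
      using mexp_minus_commute[of ?O "2*t"] by simp
    show ?thesis
      by (simp add: At_alt c mm_uminus_right matrix_scalar_ac scalar_matrix_assoc[symmetric] matrix_mul_assoc)
  qed
  ultimately show ?thesis by simp
qed

lemma E_commute: "skew_part C ** mexp ((2 * t) *\<^sub>R skew_part C) = mexp ((2 * t) *\<^sub>R skew_part C) ** skew_part (C::real^'n^'n)"
  by (rule mexp_scale_commute)

lemma Ei_E: "mexp (- ((2 * t) *\<^sub>R skew_part C)) ** mexp ((2 * t) *\<^sub>R skew_part (C::real^'n^'n)) = mat 1"
  by (rule mexp_inv_left)

lemma E_Ei: "mexp ((2 * t) *\<^sub>R skew_part C) ** mexp (- ((2 * t) *\<^sub>R skew_part (C::real^'n^'n))) = mat 1"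
  by (rule mexp_inv_right)

definition Qm :: "real^'n^'n \<Rightarrow> real \<Rightarrow> real^'n^'n" where
  "Qm C t = mexp ((2 * t) *\<^sub>R skew_part C) ** mexp (t *\<^sub>R transpose C)"

definition Pm :: "real^'n^'n \<Rightarrow> real \<Rightarrow> real \<Rightarrow> real^'n^'n" where
  "Pm C T t = mexp ((2 * t) *\<^sub>R skew_part C) ** mexp ((T - t) *\<^sub>R C) ** mexp (- (2 * T) *\<^sub>R skew_part C)"

lemma Qm_0: "Qm C 0 = mat 1" by (simp add: Qm_def mexp_zero)
lemma Pm_T: "Pm C T T = mat 1" by (simp add: Pm_def mexp_zero E_Ei)
lemma Qm_T: "Qm C T = Fmat T C" by (simp add: Qm_def Fmat_def)
lemma Pm_0: "Pm C T 0 = transpose (Fmat T C)" by (simp add: Pm_def mexp_zero Fmat_transpose)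

lemma deriv_Qm: "(Qm C has_vector_derivative At C t ** Qm C t) (at t within S)"
proof -
  let ?O = "skew_part C"
  let ?E = "mexp ((2 * t) *\<^sub>R ?O)" and ?Ei = "mexp (- ((2 * t) *\<^sub>R ?O))" and ?G = "mexp (t *\<^sub>R transpose C)"
  have "(Qm C has_vector_derivative (?E ** (transpose C ** ?G) + (2 *\<^sub>R (?O ** ?E)) ** ?G)) (at t within S)"
    unfolding Qm_def[abs_def]
    by (rule bounded_bilinear.has_vector_derivative[OF bounded_bilinear_mm deriv_E mexp_scale_deriv])
  moreover have "?E ** (transpose C ** ?G) + (2 *\<^sub>R (?O ** ?E)) ** ?G = At C t ** Qm C t"
  proof -
    have "?E ** (transpose C ** ?G) + (2 *\<^sub>R (?O ** ?E)) ** ?G = ?E ** ((transpose C + 2 *\<^sub>R ?O) ** ?G)"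
      by (simp add: E_commute mm_add_rdistrib matrix_add_ldistrib matrix_scalar_ac scalar_matrix_assoc[symmetric] matrix_mul_assoc)
    also have "transpose C + 2 *\<^sub>R ?O = C" by (simp add: skew_2)
    also have "?E ** (C ** ?G) = ?E ** C ** (?Ei ** ?E) ** ?G" by (simp add: Ei_E matrix_mul_assoc)
    also have "\<dots> = At C t ** Qm C t" by (simp add: At_alt Qm_def matrix_mul_assoc)
    finally show ?thesis .
  qed
  ultimately show ?thesis by simp
qed

lemma deriv_Pm: "(Pm C T has_vector_derivative - (transpose (At C t) ** Pm C T t)) (at t within S)"
proof -
  let ?O = "skew_part C"
  let ?E = "mexp ((2 * t) *\<^sub>R ?O)" and ?Ei = "mexp (- ((2 * t) *\<^sub>R ?O))" and ?H = "mexp ((T - t) *\<^sub>R C)"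
    and ?K = "mexp (- (2 * T) *\<^sub>R skew_part C)"
  have d1: "((\<lambda>t. mexp ((2 * t) *\<^sub>R ?O) ** mexp ((T - t) *\<^sub>R C)) has_vector_derivative (?E ** (- (C ** ?H)) + (2 *\<^sub>R (?O ** ?E)) ** ?H)) (at t within S)"
    by (rule bounded_bilinear.has_vector_derivative[OF bounded_bilinear_mm deriv_E deriv_H])
  have "(Pm C T has_vector_derivative (?E ** (- (C ** ?H)) + (2 *\<^sub>R (?O ** ?E)) ** ?H) ** ?K) (at t within S)"
    unfolding Pm_def[abs_def]
    using bounded_linear.has_vector_derivative[OF bounded_bilinear.bounded_linear_left[OF bounded_bilinear_mm, of ?K] d1]
    by simp
  moreover have "(?E ** (- (C ** ?H)) + (2 *\<^sub>R (?O ** ?E)) ** ?H) ** ?K = - (transpose (At C t) ** Pm C T t)"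
  proof -
    have "?E ** (- (C ** ?H)) + (2 *\<^sub>R (?O ** ?E)) ** ?H = ?E ** ((2 *\<^sub>R ?O - C) ** ?H)"
      by (simp add: E_commute mm_diff_rdistrib mm_diff_ldistrib mm_uminus_right matrix_scalar_ac scalar_matrix_assoc[symmetric] matrix_mul_assoc)
    also have "2 *\<^sub>R ?O - C = - transpose C" by (simp add: skew_2)
    also have "?E ** ((- transpose C) ** ?H) = - (?E ** transpose C ** (?Ei ** ?E) ** ?H)"
      by (simp add: Ei_E matrix_mul_assoc mm_uminus_left mm_uminus_right)
    finally have "?E ** (- (C ** ?H)) + (2 *\<^sub>R (?O ** ?E)) ** ?H = - (?E ** transpose C ** (?Ei ** ?E) ** ?H)" .
    then show ?thesis
      by (simp add: At_transpose Pm_def matrix_mul_assoc mm_uminus_left)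
  qed
  ultimately show ?thesis by simp
qed

lemma normal_Om_commute:
  assumes "normal_matrix C"
  shows "skew_part C ** C = C ** skew_part (C::real^'n^'n)"
proof -
  have n: "C ** transpose C = transpose C ** C" using assms by (simp add: normal_matrix_def)
  have "skew_part C ** C = (1/2) *\<^sub>R (C ** C - transpose C ** C)"
    by (simp add: skew_part_def mm_diff_rdistrib scalar_matrix_assoc[symmetric])
  also have "\<dots> = (1/2) *\<^sub>R (C ** C - C ** transpose C)" by (simp add: n)
  also have "\<dots> = C ** skew_part C"
    by (simp add: skew_part_def mm_diff_ldistrib matrix_scalar_ac scalar_matrix_assoc[symmetric] scaleR_diff_right)
  finally show ?thesis .
qed

lemma At_normal: "normal_matrix C \<Longrightarrow> At C t = C"
proof -
  assume n: "normal_matrix C"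
  have "mexp ((2 * t) *\<^sub>R skew_part C) ** C = C ** mexp ((2 * t) *\<^sub>R skew_part C)"
    by (rule mexp_commute[symmetric]) (simp add: normal_Om_commute[OF n] matrix_scalar_ac scalar_matrix_assoc[symmetric])
  then show ?thesis by (simp add: At_alt matrix_mul_assoc[symmetric] E_Ei)
qed

lemma At_const_iff:
  assumes T: "T > 0"
  shows "(\<forall>t\<in>{0..T}. At C t = C) \<longleftrightarrow> normal_matrix (C::real^'n^'n)"
proof
  assume n: "normal_matrix C"
  then show "\<forall>t\<in>{0..T}. At C t = C" by (simp add: At_normal)
next
  assume c: "\<forall>t\<in>{0..T}. At C t = C"
  have d1: "(At C has_vector_derivative (2 *\<^sub>R (skew_part C ** At C 0) - 2 *\<^sub>R (At C 0 ** skew_part C))) (at 0 within {0..T})"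
    by (rule deriv_At)
  have d2: "(At C has_vector_derivative 0) (at 0 within {0..T})"
    by (rule has_vector_derivative_transform[where f="\<lambda>_. C"]) (use c T in auto)
  have "2 *\<^sub>R (skew_part C ** At C 0) - 2 *\<^sub>R (At C 0 ** skew_part C) = 0"
    by (rule vector_derivative_unique_within_closed_interval[of 0 T 0 "At C", unfolded cbox_interval, OF T _ d1 d2])
       (use T in auto)
  then have "2 *\<^sub>R skew_part C ** C - C ** (2 *\<^sub>R skew_part C) = 0"
    by (simp add: At_0 matrix_scalar_ac scalar_matrix_assoc[symmetric])
  then have "(C - transpose C) ** C - C ** (C - transpose C) = 0" by (simp add: skew_2)
  then show "normal_matrix C"
    by (simp add: normal_matrix_def mm_diff_rdistrib mm_diff_ldistrib)
qed

lemma comm_scale: "X ** Y = Y ** X \<Longrightarrow> (s *\<^sub>R X) ** Y = Y ** (s *\<^sub>R (X::real^'n^'n))"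
  by (simp add: matrix_scalar_ac scalar_matrix_assoc[symmetric])

lemma mexp_comm1: "X ** Y = Y ** X \<Longrightarrow> mexp (s *\<^sub>R X) ** Y = Y ** mexp (s *\<^sub>R (X::real^'n^'n))"
  by (rule mexp_commute[symmetric]) (simp add: comm_scale)

lemma mexp_comm2: "X ** Y = Y ** X \<Longrightarrow> mexp (s *\<^sub>R X) ** mexp (r *\<^sub>R Y) = mexp (r *\<^sub>R Y) ** mexp (s *\<^sub>R (X::real^'n^'n))"
  by (rule mexp_commute_mexp) (metis comm_scale)

lemma transpose_add': "transpose (A + B) = transpose A + transpose (B::real^'n^'m)"
  by (simp add: transpose_def vec_eq_iff)

lemma normal_sum:
  fixes P Q :: "real^'n^'n"
  assumes "normal_matrix P" "normal_matrix Q" "P ** transpose Q = transpose Q ** P"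
  shows "normal_matrix (P + Q)"
proof -
  have "transpose (P ** transpose Q) = transpose (transpose Q ** P)" using assms(3) by simp
  then have c2: "Q ** transpose P = transpose P ** Q" by (simp add: matrix_transpose_mul)
  show ?thesis
    using assms c2 unfolding normal_matrix_def
    by (simp add: matrix_add_ldistrib mm_add_rdistrib transpose_add' algebra_simps)
qed

lemma normal_orth_prod:
  fixes e S :: "real^'n^'n"
  assumes "normal_matrix S" "e ** S = S ** e" "e ** transpose S = transpose S ** e"
    "transpose e ** e = mat 1" "e ** transpose e = mat 1"
  shows "normal_matrix (e ** S)"
proof -
  have "(e ** S) ** transpose (e ** S) = e ** (S ** transpose S) ** transpose e"
    by (simp add: matrix_transpose_mul matrix_mul_assoc)
  also have "\<dots> = S ** transpose S ** (e ** transpose e)"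
    using assms(2,3) by (simp add: matrix_mul_assoc) (metis matrix_mul_assoc)
  also have "\<dots> = transpose S ** S" using assms(1,5) by (simp add: normal_matrix_def)
  also have "\<dots> = transpose S ** (transpose e ** e) ** S" using assms(4) by simp
  also have "\<dots> = transpose (e ** S) ** (e ** S)" by (simp add: matrix_transpose_mul matrix_mul_assoc)
  finally show ?thesis by (simp add: normal_matrix_def)
qed

lemma lcomm: "X ** Y = Y ** X \<Longrightarrow> X ** (Y ** Z) = Y ** (X ** (Z::real^'n^'n))"
  by (metis matrix_mul_assoc)

lemma linv: "X ** Y = mat 1 \<Longrightarrow> X ** (Y ** Z) = (Z::real^'n^'n)"
  by (metis matrix_mul_assoc matrix_mul_lid)

lemma normal_R:
  fixes C R :: "real^'n^'n"
  assumes n: "normal_matrix C" and eq: "lam *\<^sub>R C = transpose (Fmat T C) ** (R - Fmat T C) ** mat 1"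
  shows "normal_matrix R"
proof -
  let ?O = "skew_part C" and ?Ct = "transpose C"
  define e where "e = mexp ((2*T) *\<^sub>R ?O)"
  define ei where "ei = mexp (- ((2*T) *\<^sub>R ?O))"
  define g where "g = mexp (T *\<^sub>R ?Ct)"
  define gi where "gi = mexp (- (T *\<^sub>R ?Ct))"
  define h where "h = mexp (T *\<^sub>R C)"
  define hi where "hi = mexp (- (T *\<^sub>R C))"
  have cCt: "?Ct ** C = C ** ?Ct" using n by (simp add: normal_matrix_def)
  have cOC: "?O ** C = C ** ?O" by (rule normal_Om_commute[OF n])
  have Ct_eq: "?Ct = C - 2 *\<^sub>R ?O" by (simp add: skew_2)
  have cOCt: "?O ** ?Ct = ?Ct ** ?O"
    unfolding Ct_eq by (simp add: mm_diff_ldistrib mm_diff_rdistrib cOC matrix_scalar_ac scalar_matrix_assoc[symmetric])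
  have cCtO: "?Ct ** ?O = ?O ** ?Ct" using cOCt by simp
  have cCO: "C ** ?O = ?O ** C" using cOC by simp
  have cCCt: "C ** ?Ct = ?Ct ** C" using cCt by simp
  \<comment> \<open>commutations, oriented big ** small with order C < Ct < e < ei < g < gi < h < hi\<close>
  have c1: "?Ct ** C = C ** ?Ct" by (rule cCt)
  have c2: "e ** C = C ** e" "e ** ?Ct = ?Ct ** e"
    unfolding e_def by (rule mexp_comm1[OF cOC], rule mexp_comm1[OF cOCt])
  have c3: "ei ** C = C ** ei" "ei ** ?Ct = ?Ct ** ei" "ei ** e = e ** ei"
    unfolding ei_def e_def using mexp_comm1[OF cOC, of "-(2*T)"] mexp_comm1[OF cOCt, of "-(2*T)"]
      mexp_comm2[of ?O ?O "-(2*T)" "2*T"] by simp_all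
  have c4: "g ** C = C ** g" "g ** ?Ct = ?Ct ** g" "g ** e = e ** g" "g ** ei = ei ** g"
    unfolding g_def e_def ei_def using mexp_comm1[OF cCt, of T] mexp_comm1[of ?Ct ?Ct T]
      mexp_comm2[OF cCtO, of T "2*T"] mexp_comm2[OF cCtO, of T "-(2*T)"] by simp_all
  have c5: "gi ** C = C ** gi" "gi ** ?Ct = ?Ct ** gi" "gi ** e = e ** gi" "gi ** ei = ei ** gi" "gi ** g = g ** gi"
    unfolding gi_def g_def e_def ei_def using mexp_comm1[OF cCt, of "-T"] mexp_comm1[of ?Ct ?Ct "-T"]
      mexp_comm2[OF cCtO, of "-T" "2*T"] mexp_comm2[OF cCtO, of "-T" "-(2*T)"] mexp_comm2[of ?Ct ?Ct "-T" T] by simp_all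
  have c6: "h ** C = C ** h" "h ** ?Ct = ?Ct ** h" "h ** e = e ** h" "h ** ei = ei ** h" "h ** g = g ** h" "h ** gi = gi ** h"
    unfolding h_def g_def gi_def e_def ei_def using mexp_comm1[of C C T] mexp_comm1[OF cCCt, of T]
      mexp_comm2[OF cCO, of T "2*T"] mexp_comm2[OF cCO, of T "-(2*T)"] mexp_comm2[OF cCCt, of T T]
      mexp_comm2[OF cCCt, of T "-T"] by simp_all
  have c7: "hi ** C = C ** hi" "hi ** ?Ct = ?Ct ** hi" "hi ** e = e ** hi" "hi ** ei = ei ** hi" "hi ** g = g ** hi" "hi ** gi = gi ** hi" "hi ** h = h ** hi"
    unfolding hi_def h_def g_def gi_def e_def ei_def using mexp_comm1[of C C "-T"] mexp_comm1[OF cCCt, of "-T"]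
      mexp_comm2[OF cCO, of "-T" "2*T"] mexp_comm2[OF cCO, of "-T" "-(2*T)"] mexp_comm2[OF cCCt, of "-T" T]
      mexp_comm2[OF cCCt, of "-T" "-T"] mexp_comm2[of C C "-T" T] by simp_all
  have i1: "e ** ei = mat 1" unfolding e_def ei_def by (rule mexp_inv_right)
  have i2: "g ** gi = mat 1" unfolding g_def gi_def by (rule mexp_inv_right)
  have i3: "h ** hi = mat 1" unfolding h_def hi_def by (rule mexp_inv_right)
  note comm = c1 c2 c3 c4 c5 c6 c7
  note lc = lcomm[OF c1] lcomm[OF c2(1)] lcomm[OF c2(2)] lcomm[OF c3(1)] lcomm[OF c3(2)] lcomm[OF c3(3)]
    lcomm[OF c4(1)] lcomm[OF c4(2)] lcomm[OF c4(3)] lcomm[OF c4(4)]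
    lcomm[OF c5(1)] lcomm[OF c5(2)] lcomm[OF c5(3)] lcomm[OF c5(4)] lcomm[OF c5(5)]
    lcomm[OF c6(1)] lcomm[OF c6(2)] lcomm[OF c6(3)] lcomm[OF c6(4)] lcomm[OF c6(5)] lcomm[OF c6(6)]
    lcomm[OF c7(1)] lcomm[OF c7(2)] lcomm[OF c7(3)] lcomm[OF c7(4)] lcomm[OF c7(5)] lcomm[OF c7(6)] lcomm[OF c7(7)]
  note inv = i1 i2 i3 linv[OF i1] linv[OF i2] linv[OF i3]
  have F: "Fmat T C = e ** g" by (simp add: Fmat_def e_def g_def)
  have Ft: "transpose (Fmat T C) = h ** ei" by (simp add: Fmat_transpose h_def ei_def)
  have te: "transpose e = ei" "transpose ei = e" unfolding e_def ei_def
    by (simp_all add: mexp_skew_transpose mexp_skew_transpose')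
  have tg: "transpose g = h" "transpose h = g" "transpose gi = hi" "transpose hi = gi"
    unfolding g_def h_def gi_def hi_def by (simp_all add: mexp_transpose transpose_scaleR transpose_uminus)
  have "R - Fmat T C = (e ** hi) ** ((h ** ei) ** (R - Fmat T C))"
    by (simp add: matrix_mul_assoc[symmetric] comm lc inv)
  also have "\<dots> = lam *\<^sub>R (e ** (hi ** C))"
  proof -
    have eq': "h ** (ei ** (R - Fmat T C)) = lam *\<^sub>R C"
      using eq by (simp add: Ft matrix_mul_assoc[symmetric])
    show ?thesis by (simp add: eq' matrix_mul_assoc[symmetric] matrix_scalar_ac scalar_matrix_assoc[symmetric])
  qed
  finally have R: "R = e ** g + lam *\<^sub>R (e ** (hi ** C))" by (simp add: F algebra_simps)
  have Rt: "transpose R = h ** ei + lam *\<^sub>R (?Ct ** (gi ** ei))"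
    unfolding R by (simp add: transpose_add' transpose_scaleR matrix_transpose_mul te tg matrix_mul_assoc)
  show ?thesis
    unfolding normal_matrix_def Rt unfolding R
    by (simp add: matrix_add_ldistrib mm_add_rdistrib matrix_mul_assoc[symmetric] matrix_scalar_ac
        scalar_matrix_assoc[symmetric] comm lc inv algebra_simps)
qed

lemma transpose_zero': "transpose (0::real^'n^'m) = 0"
  by (simp add: transpose_def vec_eq_iff)

lemma transpose_diff': "transpose (A - B) = transpose A - transpose (B::real^'n^'m)"
  by (simp add: transpose_def vec_eq_iff)

lemma mv_uminus_left: "(- (A::real^'n^'m)) *v x = - (A *v x)"
  by (simp add: matrix_vector_mult_def vec_eq_iff sum_negf)

lemma Pm_split: "Pm C T t = mexp ((2 * t) *\<^sub>R skew_part C) ** mexp (- (t *\<^sub>R C)) ** transpose (Fmat T C)"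
proof -
  have "mexp ((T - t) *\<^sub>R C) = mexp (- (t *\<^sub>R C)) ** mexp (T *\<^sub>R C)"
    using mexp_add_scale[of "-t" T C] by simp
  then show ?thesis
    by (simp add: Pm_def Fmat_transpose matrix_mul_assoc)
qed

lemma Qm_transpose: "transpose (Qm C t) = mexp (t *\<^sub>R C) ** mexp (- ((2 * t) *\<^sub>R skew_part C))"
  by (simp add: Qm_def matrix_transpose_mul mexp_skew_transpose mexp_scale_transpose skew_transpose)

lemma key_identity:
  fixes C R S0 :: "real^'n^'n"
  assumes ch: "lam *\<^sub>R C = transpose (Fmat T C) ** (R - Fmat T C) ** S0"
  shows "Pm C T t ** ((R - Fmat T C) ** S0) ** transpose (Qm C t) = lam *\<^sub>R At C t"
proof -
  let ?E = "mexp ((2 * t) *\<^sub>R skew_part C)" and ?Ei = "mexp (- ((2 * t) *\<^sub>R skew_part C))"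
    and ?a = "mexp (- (t *\<^sub>R C))" and ?b = "mexp (t *\<^sub>R C)"
  have ab: "?a ** ?b = mat 1" by (rule mexp_inv_left)
  have aC: "?a ** C = C ** ?a" using mexp_comm1[of C C "-t"] by simp
  have "Pm C T t ** ((R - Fmat T C) ** S0) ** transpose (Qm C t)
      = ?E ** ?a ** (transpose (Fmat T C) ** (R - Fmat T C) ** S0) ** ?b ** ?Ei"
    by (simp add: Pm_split Qm_transpose matrix_mul_assoc)
  also have "\<dots> = lam *\<^sub>R (?E ** (?a ** C) ** ?b ** ?Ei)"
    by (simp add: ch[symmetric] matrix_scalar_ac scalar_matrix_assoc[symmetric] matrix_mul_assoc)
  also have "\<dots> = lam *\<^sub>R (?E ** C ** (?a ** ?b) ** ?Ei)"
    by (simp add: aC matrix_mul_assoc)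
  also have "\<dots> = lam *\<^sub>R At C t" by (simp add: ab At_alt)
  finally show ?thesis .
qed

context
  fixes M :: "'a measure" and X0 xi :: "'a \<Rightarrow> real^'n" and R :: "real^'n^'n" and lam T :: real
  assumes P: "prob_space M"
    and mX: "X0 \<in> borel_measurable M" and iX: "integrable M (\<lambda>\<omega>. (norm (X0 \<omega>))\<^sup>2)"
    and mxi: "xi \<in> borel_measurable M" and ixi: "integrable M (\<lambda>\<omega>. (norm (xi \<omega>))\<^sup>2)"
    and m0: "integral\<^sup>L M xi = 0"
    and ind: "prob_space.indep_var M borel X0 borel xi"
    and lam: "lam > 0" and T: "T > 0"
begin

abbreviation "Sig \<equiv> integral\<^sup>L M (\<lambda>\<omega>. outer (X0 \<omega>) (X0 \<omega>))"
abbreviation "Zv \<equiv> (\<lambda>\<omega>. R *v X0 \<omega> + xi \<omega>)"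

lemmas intlin = int_lin[OF P mX iX mxi ixi m0 ind]

lemma backward:
  assumes ch: "lam *\<^sub>R C = transpose (Fmat T C) ** (R - Fmat T C) ** Sig"
    and hX: "\<forall>\<omega>\<in>space M. \<forall>t\<in>{0..T}. X t \<omega> = Qm C t *v X0 \<omega>"
    and hY: "\<forall>\<omega>\<in>space M. \<forall>t\<in>{0..T}. Y t \<omega> = Pm C T t *v (Zv \<omega> - X T \<omega>)"
    and hA: "\<forall>t\<in>{0..T}. A t = At C t"
  shows "hamilton_solution M X0 Zv lam T X Y A"
  unfolding hamilton_solution_def
proof (intro conjI ballI)
  have T0: "T \<in> {0..T}" "0 \<in> {0..T}" using T by auto
  show "continuous_on {0..T} A"
  proof -
    have "continuous_on {0..T} (At C)"
      by (rule continuous_on_vector_derivative[OF deriv_At])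
    then show ?thesis by (rule continuous_on_eq) (use hA in auto)
  qed
  fix \<omega> assume \<omega>: "\<omega> \<in> space M"
  show "X 0 \<omega> = X0 \<omega>" using hX \<omega> T0 by (simp add: Qm_0)
  show "Y T \<omega> = Zv \<omega> - X T \<omega>" using hY \<omega> T0 by (simp add: Pm_T)
  fix t assume t: "t \<in> {0..T}"
  show "((\<lambda>s. X s \<omega>) has_vector_derivative A t *v X t \<omega>) (at t within {0..T})"
  proof (rule has_vector_derivative_transform[OF t])
    show "X s \<omega> = Qm C s *v X0 \<omega>" if "s \<in> {0..T}" for s using hX \<omega> that by simp
    show "((\<lambda>s. Qm C s *v X0 \<omega>) has_vector_derivative A t *v X t \<omega>) (at t within {0..T})"
      using bounded_linear.has_vector_derivative[OF bounded_bilinear.bounded_linear_left[OF bounded_bilinear_mv, of "X0 \<omega>"] deriv_Qm[of C t "{0..T}"]]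
      using hA hX \<omega> t by (simp add: matrix_vector_mul_assoc)
  qed
  show "((\<lambda>s. Y s \<omega>) has_vector_derivative - (transpose (A t) *v Y t \<omega>)) (at t within {0..T})"
  proof (rule has_vector_derivative_transform[OF t])
    show "Y s \<omega> = Pm C T s *v (Zv \<omega> - X T \<omega>)" if "s \<in> {0..T}" for s using hY \<omega> that by simp
    show "((\<lambda>s. Pm C T s *v (Zv \<omega> - X T \<omega>)) has_vector_derivative - (transpose (A t) *v Y t \<omega>)) (at t within {0..T})"
      using bounded_linear.has_vector_derivative[OF bounded_bilinear.bounded_linear_left[OF bounded_bilinear_mv, of "Zv \<omega> - X T \<omega>"] deriv_Pm[of C T t "{0..T}"]]
      using hA hY \<omega> t by (simp add: matrix_vector_mul_assoc mv_uminus_left)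
  qed
next
  fix t assume t: "t \<in> {0..T}"
  have T0: "T \<in> {0..T}" using T by auto
  have e: "outer (Y t \<omega>) (X t \<omega>) = outer ((Pm C T t ** (R - Fmat T C)) *v X0 \<omega> + Pm C T t *v xi \<omega>) (Qm C t *v X0 \<omega> + 0 *v xi \<omega>)"
    if \<omega>: "\<omega> \<in> space M" for \<omega>
  proof -
    have eZ: "Zv \<omega> - X T \<omega> = (R - Fmat T C) *v X0 \<omega> + xi \<omega>"
      using hX \<omega> T0 by (simp add: Qm_T matrix_vector_mult_diff_rdistrib)
    have y1: "Y t \<omega> = Pm C T t *v (Zv \<omega> - X T \<omega>)" using hY \<omega> t by blast
    then have y2: "Y t \<omega> = (Pm C T t ** (R - Fmat T C)) *v X0 \<omega> + Pm C T t *v xi \<omega>"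
      unfolding eZ by (simp add: matrix_vector_right_distrib matrix_vector_mul_assoc)
    have x: "X t \<omega> = Qm C t *v X0 \<omega>" using hX \<omega> t by blast
    have z: "(0::real^'n^'n) *v xi \<omega> = 0" by (simp add: matrix_vector_mult_def vec_eq_iff)
    show ?thesis by (simp add: y2 x z)
  qed
  have "integral\<^sup>L M (\<lambda>\<omega>. outer (Y t \<omega>) (X t \<omega>)) =
      integral\<^sup>L M (\<lambda>\<omega>. outer ((Pm C T t ** (R - Fmat T C)) *v X0 \<omega> + Pm C T t *v xi \<omega>) (Qm C t *v X0 \<omega> + 0 *v xi \<omega>))"
    by (rule Bochner_Integration.integral_cong[OF refl e])
  also have "\<dots> = Pm C T t ** ((R - Fmat T C) ** Sig) ** transpose (Qm C t)"
    unfolding intlin(2) by (simp add: matrix_mul_assoc transpose_zero')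
  also have "\<dots> = lam *\<^sub>R At C t" by (rule key_identity[OF ch])
  finally show "A t = (1 / lam) *\<^sub>R integral\<^sup>L M (\<lambda>\<omega>. outer (Y t \<omega>) (X t \<omega>))"
    using hA t lam by simp
qed

lemma int_rep:
  fixes Yf Xf XT :: "'a \<Rightarrow> real^'n"
  assumes hY: "\<forall>\<omega>\<in>space M. Yf \<omega> = P *v (Zv \<omega> - XT \<omega>)"
    and hX: "\<forall>\<omega>\<in>space M. Xf \<omega> = Q *v X0 \<omega>"
    and hT: "\<forall>\<omega>\<in>space M. XT \<omega> = G *v X0 \<omega>"
  shows "integral\<^sup>L M (\<lambda>\<omega>. outer (Yf \<omega>) (Xf \<omega>)) = P ** ((R - G) ** Sig) ** transpose Q"
proof -
  have e: "outer (Yf \<omega>) (Xf \<omega>) = outer ((P ** (R - G)) *v X0 \<omega> + P *v xi \<omega>) (Q *v X0 \<omega> + 0 *v xi \<omega>)"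
    if \<omega>: "\<omega> \<in> space M" for \<omega>
  proof -
    have eZ: "Zv \<omega> - XT \<omega> = (R - G) *v X0 \<omega> + xi \<omega>"
      using hT \<omega> by (simp add: matrix_vector_mult_diff_rdistrib)
    have y1: "Yf \<omega> = P *v (Zv \<omega> - XT \<omega>)" using hY \<omega> by blast
    then have y2: "Yf \<omega> = (P ** (R - G)) *v X0 \<omega> + P *v xi \<omega>"
      unfolding eZ by (simp add: matrix_vector_right_distrib matrix_vector_mul_assoc)
    have x: "Xf \<omega> = Q *v X0 \<omega>" using hX \<omega> by blast
    have z: "(0::real^'n^'n) *v xi \<omega> = 0" by (simp add: matrix_vector_mult_def vec_eq_iff)
    show ?thesis by (simp add: y2 x z)
  qed
  have "integral\<^sup>L M (\<lambda>\<omega>. outer (Yf \<omega>) (Xf \<omega>)) =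
      integral\<^sup>L M (\<lambda>\<omega>. outer ((P ** (R - G)) *v X0 \<omega> + P *v xi \<omega>) (Q *v X0 \<omega> + 0 *v xi \<omega>))"
    by (rule Bochner_Integration.integral_cong[OF refl e])
  also have "\<dots> = P ** ((R - G) ** Sig) ** transpose Q"
    unfolding intlin(2) by (simp add: matrix_mul_assoc transpose_zero')
  finally show ?thesis .
qed

lemma forward:
  assumes H: "hamilton_solution M X0 Zv lam T X Y A"
  shows "\<exists>C. lam *\<^sub>R C = transpose (Fmat T C) ** (R - Fmat T C) ** Sig
    \<and> (\<forall>\<omega>\<in>space M. \<forall>t\<in>{0..T}. X t \<omega> = Qm C t *v X0 \<omega>)
    \<and> (\<forall>\<omega>\<in>space M. \<forall>t\<in>{0..T}. Y t \<omega> = Pm C T t *v (Zv \<omega> - X T \<omega>))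
    \<and> (\<forall>t\<in>{0..T}. A t = At C t)"
proof -
  have contA: "continuous_on {0..T} A"
    and X0eq: "\<And>\<omega>. \<omega> \<in> space M \<Longrightarrow> X 0 \<omega> = X0 \<omega>"
    and dX: "\<And>\<omega> t. \<omega> \<in> space M \<Longrightarrow> t \<in> {0..T} \<Longrightarrow> ((\<lambda>s. X s \<omega>) has_vector_derivative (A t *v X t \<omega>)) (at t within {0..T})"
    and dY0: "\<And>\<omega> t. \<omega> \<in> space M \<Longrightarrow> t \<in> {0..T} \<Longrightarrow> ((\<lambda>s. Y s \<omega>) has_vector_derivative (- (transpose (A t) *v Y t \<omega>))) (at t within {0..T})"
    and YT: "\<And>\<omega>. \<omega> \<in> space M \<Longrightarrow> Y T \<omega> = Zv \<omega> - X T \<omega>"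
    and Aeq: "\<And>t. t \<in> {0..T} \<Longrightarrow> A t = (1 / lam) *\<^sub>R integral\<^sup>L M (\<lambda>\<omega>. outer (Y t \<omega>) (X t \<omega>))"
    using H unfolding hamilton_solution_def by auto
  have T0: "0 \<in> {0..T}" "T \<in> {0..T}" using T by auto
  define L where "L t = - transpose (A t)" for t
  have contL: "continuous_on {0..T} L"
    unfolding L_def by (intro continuous_on_minus bounded_linear.continuous_on[OF bounded_linear_transpose contA])
  have dY: "\<And>\<omega> t. \<omega> \<in> space M \<Longrightarrow> t \<in> {0..T} \<Longrightarrow> ((\<lambda>s. Y s \<omega>) has_vector_derivative (L t *v Y t \<omega>)) (at t within {0..T})"
    using dY0 by (simp add: L_def mv_uminus_left)
  have "\<exists>\<Phi>. (\<forall>t\<in>{0..T}. (\<Phi> has_vector_derivative A t ** \<Phi> t) (at t within {0..T}))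
            \<and> (\<forall>\<omega>\<in>space M. \<forall>t\<in>{0..T}. X t \<omega> = \<Phi> t *v X 0 \<omega>)"
    by (rule fundamental_matrix[OF contA _ T0(1)]) (erule dX, assumption)
  then obtain \<Phi> where dPhi: "\<forall>t\<in>{0..T}. (\<Phi> has_vector_derivative A t ** \<Phi> t) (at t within {0..T})"
    and Xrep0: "\<forall>\<omega>\<in>space M. \<forall>t\<in>{0..T}. X t \<omega> = \<Phi> t *v X 0 \<omega>"
    by blast
  have Xrep: "\<forall>\<omega>\<in>space M. \<forall>t\<in>{0..T}. X t \<omega> = \<Phi> t *v X0 \<omega>"
  proof (intro ballI)
    fix \<omega> t assume "\<omega> \<in> space M" "t \<in> {0..T}"
    then show "X t \<omega> = \<Phi> t *v X0 \<omega>" using Xrep0 X0eq by metis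
  qed
  have "\<exists>\<Psi>. (\<forall>t\<in>{0..T}. (\<Psi> has_vector_derivative L t ** \<Psi> t) (at t within {0..T}))
            \<and> (\<forall>\<omega>\<in>space M. \<forall>t\<in>{0..T}. Y t \<omega> = \<Psi> t *v Y T \<omega>)"
    by (rule fundamental_matrix[OF contL _ T0(2)]) (erule dY, assumption)
  then obtain \<Psi> where dPsi: "\<forall>t\<in>{0..T}. (\<Psi> has_vector_derivative L t ** \<Psi> t) (at t within {0..T})"
    and Yrep0: "\<forall>\<omega>\<in>space M. \<forall>t\<in>{0..T}. Y t \<omega> = \<Psi> t *v Y T \<omega>"
    by blast
  have Yrep: "\<forall>\<omega>\<in>space M. \<forall>t\<in>{0..T}. Y t \<omega> = \<Psi> t *v (Zv \<omega> - X T \<omega>)"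
  proof (intro ballI)
    fix \<omega> t assume "\<omega> \<in> space M" "t \<in> {0..T}"
    then show "Y t \<omega> = \<Psi> t *v (Zv \<omega> - X T \<omega>)" using Yrep0 YT by metis
  qed
  define K where "K = (R - \<Phi> T) ** Sig"
  define W where "W t = \<Psi> t ** K ** transpose (\<Phi> t)" for t
  have WA: "W t = lam *\<^sub>R A t" if t: "t \<in> {0..T}" for t
  proof -
    have "integral\<^sup>L M (\<lambda>\<omega>. outer (Y t \<omega>) (X t \<omega>)) = W t"
      unfolding W_def K_def
    proof (rule int_rep)
      show "\<forall>\<omega>\<in>space M. Y t \<omega> = \<Psi> t *v (Zv \<omega> - X T \<omega>)" using Yrep t by blast
      show "\<forall>\<omega>\<in>space M. X t \<omega> = \<Phi> t *v X0 \<omega>" using Xrep t by blast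
      show "\<forall>\<omega>\<in>space M. X T \<omega> = \<Phi> T *v X0 \<omega>" using Xrep T0 by blast
    qed
    then show ?thesis using Aeq[OF t] lam by simp
  qed
  have dW: "(W has_vector_derivative (W t ** transpose (A t) - transpose (A t) ** W t)) (at t within {0..T})"
    if t: "t \<in> {0..T}" for t
  proof -
    have d1: "((\<lambda>t. \<Psi> t ** K) has_vector_derivative (L t ** \<Psi> t) ** K) (at t within {0..T})"
      using bounded_linear.has_vector_derivative[OF bounded_bilinear.bounded_linear_left[OF bounded_bilinear_mm, of K]] dPsi t
      by blast
    have d2: "((\<lambda>t. transpose (\<Phi> t)) has_vector_derivative transpose (A t ** \<Phi> t)) (at t within {0..T})"
      using bounded_linear.has_vector_derivative[OF bounded_linear_transpose] dPhi t by blast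
    have "(W has_vector_derivative (\<Psi> t ** K) ** transpose (A t ** \<Phi> t) + ((L t ** \<Psi> t) ** K) ** transpose (\<Phi> t)) (at t within {0..T})"
      unfolding W_def[abs_def] by (rule bounded_bilinear.has_vector_derivative[OF bounded_bilinear_mm d1 d2])
    moreover have "(\<Psi> t ** K) ** transpose (A t ** \<Phi> t) + ((L t ** \<Psi> t) ** K) ** transpose (\<Phi> t)
        = W t ** transpose (A t) - transpose (A t) ** W t"
      by (simp add: W_def L_def matrix_transpose_mul matrix_mul_assoc mm_uminus_left)
    ultimately show ?thesis by simp
  qed
  define C where "C = A 0"
  let ?O = "skew_part C"
  have dA: "(A has_vector_derivative (A t ** transpose (A t) - transpose (A t) ** A t)) (at t within {0..T})"
    if t: "t \<in> {0..T}" for t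
  proof (rule has_vector_derivative_transform[OF t])
    show "A s = (1 / lam) *\<^sub>R W s" if "s \<in> {0..T}" for s using WA[OF that] lam by simp
    have "((\<lambda>s. (1 / lam) *\<^sub>R W s) has_vector_derivative (1 / lam) *\<^sub>R (W t ** transpose (A t) - transpose (A t) ** W t)) (at t within {0..T})"
      by (rule bounded_linear.has_vector_derivative[OF bounded_linear_scaleR_right dW[OF t]])
    moreover have "(1 / lam) *\<^sub>R (W t ** transpose (A t) - transpose (A t) ** W t) = A t ** transpose (A t) - transpose (A t) ** A t"
      using lam by (simp add: WA[OF t] scalar_matrix_assoc[symmetric] matrix_scalar_ac scaleR_diff_right)
    ultimately show "((\<lambda>s. (1 / lam) *\<^sub>R W s) has_vector_derivative A t ** transpose (A t) - transpose (A t) ** A t) (at t within {0..T})"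
      by simp
  qed
  have skewconst: "A t - transpose (A t) = 2 *\<^sub>R ?O" if t: "t \<in> {0..T}" for t
  proof -
    have "\<exists>c. \<forall>x\<in>{0..T}. A x - transpose (A x) = c"
    proof (rule has_derivative_zero_constant)
      show "convex {0..T}" by (rule convex_real_interval)
      fix x assume x: "x \<in> {0..T}"
      have "((\<lambda>s. A s - transpose (A s)) has_vector_derivative
          (A x ** transpose (A x) - transpose (A x) ** A x) - transpose (A x ** transpose (A x) - transpose (A x) ** A x)) (at x within {0..T})"
        by (rule has_vector_derivative_diff[OF dA[OF x] bounded_linear.has_vector_derivative[OF bounded_linear_transpose dA[OF x]]])
      moreover have "(A x ** transpose (A x) - transpose (A x) ** A x) - transpose (A x ** transpose (A x) - transpose (A x) ** A x) = 0"
        by (simp add: matrix_transpose_mul transpose_diff')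
      ultimately show "((\<lambda>s. A s - transpose (A s)) has_derivative (\<lambda>h. 0)) (at x within {0..T})"
        by (simp add: has_vector_derivative_def)
    qed
    then obtain c where c: "\<forall>x\<in>{0..T}. A x - transpose (A x) = c" by blast
    then have "A t - transpose (A t) = A 0 - transpose (A 0)" using t T0 by auto
    then show ?thesis by (simp add: C_def skew_2)
  qed
  have AeqAt: "A t = At C t" if t: "t \<in> {0..T}" for t
  proof -
    have "(\<lambda>s. A s - At C s) t = 0"
    proof (rule gronwall_zero[where u="\<lambda>s. A s - At C s" and f="\<lambda>s. 2 *\<^sub>R (?O ** (A s - At C s)) - 2 *\<^sub>R ((A s - At C s) ** ?O)" and K="4 * norm ?O", OF _ _ T0(1)])
      fix s assume s: "s \<in> {0..T}"
      have At_eq: "transpose (A s) = A s - 2 *\<^sub>R ?O" using skewconst[OF s] by (simp add: algebra_simps)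
      have "A s ** transpose (A s) - transpose (A s) ** A s = 2 *\<^sub>R (?O ** A s) - 2 *\<^sub>R (A s ** ?O)"
        unfolding At_eq by (simp add: mm_diff_ldistrib mm_diff_rdistrib matrix_scalar_ac scalar_matrix_assoc[symmetric])
      then have dA': "(A has_vector_derivative 2 *\<^sub>R (?O ** A s) - 2 *\<^sub>R (A s ** ?O)) (at s within {0..T})"
        using dA[OF s] by simp
      show "((\<lambda>s. A s - At C s) has_vector_derivative 2 *\<^sub>R (?O ** (A s - At C s)) - 2 *\<^sub>R ((A s - At C s) ** ?O)) (at s within {0..T})"
        using has_vector_derivative_diff[OF dA' deriv_At[of C s "{0..T}"]]
        by (simp add: mm_diff_ldistrib mm_diff_rdistrib algebra_simps)
      have "norm (2 *\<^sub>R (?O ** (A s - At C s)) - 2 *\<^sub>R ((A s - At C s) ** ?O))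
          \<le> norm (2 *\<^sub>R (?O ** (A s - At C s))) + norm (2 *\<^sub>R ((A s - At C s) ** ?O))"
        by (rule norm_triangle_ineq4)
      also have "\<dots> \<le> 2 * (norm ?O * norm (A s - At C s)) + 2 * (norm (A s - At C s) * norm ?O)"
      proof -
        have n1: "norm (?O ** (A s - At C s)) \<le> norm ?O * norm (A s - At C s)" by (rule norm_mm_le)
        have n2: "norm ((A s - At C s) ** ?O) \<le> norm ?O * norm (A s - At C s)"
          using norm_mm_le[of "A s - At C s" ?O] by (simp add: mult.commute)
        show ?thesis using n1 n2 by simp
      qed
      also have "\<dots> = 4 * norm ?O * norm (A s - At C s)" by (simp add: algebra_simps)
      finally show "norm (2 *\<^sub>R (?O ** (A s - At C s)) - 2 *\<^sub>R ((A s - At C s) ** ?O)) \<le> 4 * norm ?O * norm (A s - At C s)" .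
    qed (use T0 t in \<open>auto simp: At_0 C_def\<close>)
    then show ?thesis by simp
  qed
  have XQ: "\<forall>\<omega>\<in>space M. \<forall>t\<in>{0..T}. X t \<omega> = Qm C t *v X0 \<omega>"
  proof (intro ballI)
    fix \<omega> t assume \<omega>: "\<omega> \<in> space M" and t: "t \<in> {0..T}"
    show "X t \<omega> = Qm C t *v X0 \<omega>"
    proof (rule linode_unique[OF contA _ _ T0(1) _ t, where u="\<lambda>s. X s \<omega>" and v="\<lambda>s. Qm C s *v X0 \<omega>"])
      show "((\<lambda>s. X s \<omega>) has_vector_derivative A s *v X s \<omega>) (at s within {0..T})" if "s \<in> {0..T}" for s
        by (rule dX[OF \<omega> that])
      show "((\<lambda>s. Qm C s *v X0 \<omega>) has_vector_derivative A s *v (Qm C s *v X0 \<omega>)) (at s within {0..T})"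
        if s: "s \<in> {0..T}" for s
        using bounded_linear.has_vector_derivative[OF bounded_bilinear.bounded_linear_left[OF bounded_bilinear_mv, of "X0 \<omega>"] deriv_Qm[of C s "{0..T}"]]
        by (simp add: AeqAt[OF s] matrix_vector_mul_assoc)
      show "X 0 \<omega> = Qm C 0 *v X0 \<omega>" using X0eq[OF \<omega>] by (simp add: Qm_0)
    qed
  qed
  have YP: "\<forall>\<omega>\<in>space M. \<forall>t\<in>{0..T}. Y t \<omega> = Pm C T t *v (Zv \<omega> - X T \<omega>)"
  proof (intro ballI)
    fix \<omega> t assume \<omega>: "\<omega> \<in> space M" and t: "t \<in> {0..T}"
    show "Y t \<omega> = Pm C T t *v (Zv \<omega> - X T \<omega>)"
    proof (rule linode_unique[OF contL _ _ T0(2) _ t, where u="\<lambda>s. Y s \<omega>" and v="\<lambda>s. Pm C T s *v (Zv \<omega> - X T \<omega>)"])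
      show "((\<lambda>s. Y s \<omega>) has_vector_derivative L s *v Y s \<omega>) (at s within {0..T})" if "s \<in> {0..T}" for s
        by (rule dY[OF \<omega> that])
      show "((\<lambda>s. Pm C T s *v (Zv \<omega> - X T \<omega>)) has_vector_derivative L s *v (Pm C T s *v (Zv \<omega> - X T \<omega>))) (at s within {0..T})"
        if s: "s \<in> {0..T}" for s
        using bounded_linear.has_vector_derivative[OF bounded_bilinear.bounded_linear_left[OF bounded_bilinear_mv, of "Zv \<omega> - X T \<omega>"] deriv_Pm[of C T s "{0..T}"]]
        by (simp add: AeqAt[OF s] L_def matrix_vector_mul_assoc mv_uminus_left mm_uminus_left)
      show "Y T \<omega> = Pm C T T *v (Zv \<omega> - X T \<omega>)" using YT[OF \<omega>] by (simp add: Pm_T)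
    qed
  qed
  have ch: "lam *\<^sub>R C = transpose (Fmat T C) ** (R - Fmat T C) ** Sig"
  proof -
    have "integral\<^sup>L M (\<lambda>\<omega>. outer (Y 0 \<omega>) (X 0 \<omega>)) = Pm C T 0 ** ((R - Qm C T) ** Sig) ** transpose (Qm C 0)"
    proof (rule int_rep)
      show "\<forall>\<omega>\<in>space M. Y 0 \<omega> = Pm C T 0 *v (Zv \<omega> - X T \<omega>)" using YP T0 by blast
      show "\<forall>\<omega>\<in>space M. X 0 \<omega> = Qm C 0 *v X0 \<omega>" using XQ T0 by blast
      show "\<forall>\<omega>\<in>space M. X T \<omega> = Qm C T *v X0 \<omega>" using XQ T0 by blast
    qed
    then have "lam *\<^sub>R A 0 = Pm C T 0 ** ((R - Qm C T) ** Sig) ** transpose (Qm C 0)"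
      using Aeq[OF T0(1)] lam by simp
    then show ?thesis unfolding Qm_0 by (simp add: C_def Pm_0 Qm_T matrix_mul_assoc)
  qed
  show ?thesis using ch XQ YP AeqAt by blast
qed

lemma trace_At: "trace (transpose (At C t) ** At C t) = trace (transpose C ** C)"
proof -
  let ?E = "mexp ((2 * t) *\<^sub>R skew_part C)" and ?Ei = "mexp (- ((2 * t) *\<^sub>R skew_part C))"
  have "transpose (At C t) ** At C t = ?E ** (transpose C ** C) ** ?Ei"
  proof -
    have "transpose (At C t) ** At C t = ?E ** transpose C ** (?Ei ** ?E) ** C ** ?Ei"
      unfolding At_transpose by (simp add: At_alt matrix_mul_assoc)
    then show ?thesis by (simp add: Ei_E matrix_mul_assoc)
  qed
  also have "trace \<dots> = trace (?Ei ** (?E ** (transpose C ** C)))"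
    by (metis trace_mul_sym)
  also have "\<dots> = trace (transpose C ** C)"
    by (simp add: matrix_mul_assoc Ei_E)
  finally show ?thesis .
qed

lemma cost_formula:
  assumes hX: "\<forall>\<omega>\<in>space M. \<forall>t\<in>{0..T}. X t \<omega> = Qm C t *v X0 \<omega>"
    and hA: "\<forall>t\<in>{0..T}. A t = At C t"
  shows "cost M Zv lam T X A = lam * T / 2 * trace (transpose C ** C)
          + 1/2 * trace (transpose (Fmat T C - R) ** (Fmat T C - R) ** Sig)
          + 1/2 * integral\<^sup>L M (\<lambda>\<omega>. (norm (xi \<omega>))\<^sup>2)"
proof -
  have T0: "T \<in> {0..T}" using T by auto
  have i1: "integral {0..T} (\<lambda>t. trace (transpose (A t) ** A t)) = T * trace (transpose C ** C)"
  proof -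
    have "integral {0..T} (\<lambda>t. trace (transpose (A t) ** A t)) = integral {0..T} (\<lambda>t. trace (transpose C ** C))"
      by (rule Henstock_Kurzweil_Integration.integral_cong) (simp add: hA trace_At)
    also have "\<dots> = T * trace (transpose C ** C)" using T by simp
    finally show ?thesis .
  qed
  have i2: "integral\<^sup>L M (\<lambda>\<omega>. (norm (X T \<omega> - Zv \<omega>))\<^sup>2)
      = integral\<^sup>L M (\<lambda>\<omega>. (norm ((Fmat T C - R) *v X0 \<omega> - xi \<omega>))\<^sup>2)"
  proof (rule Bochner_Integration.integral_cong[OF refl])
    fix \<omega> assume \<omega>: "\<omega> \<in> space M"
    have "X T \<omega> = Fmat T C *v X0 \<omega>" using hX \<omega> T0 by (simp add: Qm_T)
    then show "(norm (X T \<omega> - Zv \<omega>))\<^sup>2 = (norm ((Fmat T C - R) *v X0 \<omega> - xi \<omega>))\<^sup>2"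
      by (simp add: matrix_vector_mult_diff_rdistrib algebra_simps)
  qed
  show ?thesis
    unfolding cost_def i1 i2 int_cost[OF P mX iX mxi ixi m0 ind]
    by (simp add: algebra_simps)
qed

end

theorem proposition2:
  fixes M :: "'a measure"
    and X0 xi :: "'a \<Rightarrow> real^'n"
    and R :: "real^'n^'n"
    and lam T :: real
  defines "Z \<equiv> (\<lambda>\<omega>. R *v X0 \<omega> + xi \<omega>)"
    and "Sigma0 \<equiv> integral\<^sup>L M (\<lambda>\<omega>. outer (X0 \<omega>) (X0 \<omega>))"
  assumes "prob_space M"
    and "X0 \<in> borel_measurable M" and "integrable M (\<lambda>\<omega>. (norm (X0 \<omega>))\<^sup>2)"
    and "xi \<in> borel_measurable M" and "integrable M (\<lambda>\<omega>. (norm (xi \<omega>))\<^sup>2)"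
    and "integral\<^sup>L M xi = 0"
    and "prob_space.indep_var M borel X0 borel xi"
    and "lam > 0" and "T > 0"
  shows
    "(\<forall>X Y A. hamilton_solution M X0 Z lam T X Y A \<longleftrightarrow>
        (\<exists>C. lam *\<^sub>R C = transpose (Fmat T C) ** (R - Fmat T C) ** Sigma0 \<and>
          (\<forall>\<omega>\<in>space M. \<forall>t\<in>{0..T}. X t \<omega> = (mexp ((2 * t) *\<^sub>R skew_part C) ** mexp (t *\<^sub>R transpose C)) *v X0 \<omega>) \<and>
          (\<forall>\<omega>\<in>space M. \<forall>t\<in>{0..T}. Y t \<omega> = (mexp ((2 * t) *\<^sub>R skew_part C) ** mexp ((T - t) *\<^sub>R C)
                                    ** mexp (- (2 * T) *\<^sub>R skew_part C)) *v (Z \<omega> - X T \<omega>)) \<and>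
          (\<forall>t\<in>{0..T}. A t = mexp ((2 * t) *\<^sub>R skew_part C) ** C ** mexp (- (2 * t) *\<^sub>R skew_part C))))
   \<and> (\<forall>X Y A C. hamilton_solution M X0 Z lam T X Y A \<and>
        lam *\<^sub>R C = transpose (Fmat T C) ** (R - Fmat T C) ** Sigma0 \<and>
        (\<forall>\<omega>\<in>space M. \<forall>t\<in>{0..T}. X t \<omega> = (mexp ((2 * t) *\<^sub>R skew_part C) ** mexp (t *\<^sub>R transpose C)) *v X0 \<omega>) \<and>
        (\<forall>\<omega>\<in>space M. \<forall>t\<in>{0..T}. Y t \<omega> = (mexp ((2 * t) *\<^sub>R skew_part C) ** mexp ((T - t) *\<^sub>R C)
                                  ** mexp (- (2 * T) *\<^sub>R skew_part C)) *v (Z \<omega> - X T \<omega>)) \<and>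
        (\<forall>t\<in>{0..T}. A t = mexp ((2 * t) *\<^sub>R skew_part C) ** C ** mexp (- (2 * t) *\<^sub>R skew_part C))
      \<longrightarrow>
        cost M Z lam T X A =
          lam * T / 2 * trace (transpose C ** C)
          + 1/2 * trace (transpose (Fmat T C - R) ** (Fmat T C - R) ** Sigma0)
          + 1/2 * integral\<^sup>L M (\<lambda>\<omega>. (norm (xi \<omega>))\<^sup>2)
        \<and> ((\<forall>t\<in>{0..T}. A t = C) \<longleftrightarrow> normal_matrix C)
        \<and> (Sigma0 = mat 1 \<and> normal_matrix C \<longrightarrow> normal_matrix R))
   \<and> (Sigma0 = mat 1 \<and> \<not> normal_matrix R \<longrightarrow>
        (\<forall>X Y A. hamilton_solution M X0 Z lam T X Y A \<longrightarrow> \<not> (\<exists>B. \<forall>t\<in>{0..T}. A t = B)))"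
proof -
  have Zeq: "Z = (\<lambda>\<omega>. R *v X0 \<omega> + xi \<omega>)" by (simp add: Z_def)
  have Seq: "Sigma0 = integral\<^sup>L M (\<lambda>\<omega>. outer (X0 \<omega>) (X0 \<omega>))" by (simp add: Sigma0_def)
  note bw = backward[OF assms(3-11)]
  note fw = forward[OF assms(3-11)]
  note cf = cost_formula[OF assms(3-11)]
  note nR = normal_R
  have T: "T > 0" by (rule assms(11))
  have part1: "\<forall>X Y A. hamilton_solution M X0 Z lam T X Y A \<longleftrightarrow>
        (\<exists>C. lam *\<^sub>R C = transpose (Fmat T C) ** (R - Fmat T C) ** Sigma0 \<and>
          (\<forall>\<omega>\<in>space M. \<forall>t\<in>{0..T}. X t \<omega> = Qm C t *v X0 \<omega>) \<and>
          (\<forall>\<omega>\<in>space M. \<forall>t\<in>{0..T}. Y t \<omega> = Pm C T t *v (Z \<omega> - X T \<omega>)) \<and>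
          (\<forall>t\<in>{0..T}. A t = At C t))"
    unfolding Zeq Seq using bw fw by blast
  have part2: "\<forall>X Y A C. hamilton_solution M X0 Z lam T X Y A \<and>
        lam *\<^sub>R C = transpose (Fmat T C) ** (R - Fmat T C) ** Sigma0 \<and>
        (\<forall>\<omega>\<in>space M. \<forall>t\<in>{0..T}. X t \<omega> = Qm C t *v X0 \<omega>) \<and>
        (\<forall>\<omega>\<in>space M. \<forall>t\<in>{0..T}. Y t \<omega> = Pm C T t *v (Z \<omega> - X T \<omega>)) \<and>
        (\<forall>t\<in>{0..T}. A t = At C t)
      \<longrightarrow>
        cost M Z lam T X A =
          lam * T / 2 * trace (transpose C ** C)
          + 1/2 * trace (transpose (Fmat T C - R) ** (Fmat T C - R) ** Sigma0)
          + 1/2 * integral\<^sup>L M (\<lambda>\<omega>. (norm (xi \<omega>))\<^sup>2)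
        \<and> ((\<forall>t\<in>{0..T}. A t = C) \<longleftrightarrow> normal_matrix C)
        \<and> (Sigma0 = mat 1 \<and> normal_matrix C \<longrightarrow> normal_matrix R)"
  proof (intro allI impI conjI)
    fix X Y A C
    assume h: "hamilton_solution M X0 Z lam T X Y A \<and>
        lam *\<^sub>R C = transpose (Fmat T C) ** (R - Fmat T C) ** Sigma0 \<and>
        (\<forall>\<omega>\<in>space M. \<forall>t\<in>{0..T}. X t \<omega> = Qm C t *v X0 \<omega>) \<and>
        (\<forall>\<omega>\<in>space M. \<forall>t\<in>{0..T}. Y t \<omega> = Pm C T t *v (Z \<omega> - X T \<omega>)) \<and>
        (\<forall>t\<in>{0..T}. A t = At C t)"
    then have ch: "lam *\<^sub>R C = transpose (Fmat T C) ** (R - Fmat T C) ** Sigma0"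
      and hX: "\<forall>\<omega>\<in>space M. \<forall>t\<in>{0..T}. X t \<omega> = Qm C t *v X0 \<omega>"
      and hA: "\<forall>t\<in>{0..T}. A t = At C t" by blast+
    show "cost M Z lam T X A =
          lam * T / 2 * trace (transpose C ** C)
          + 1/2 * trace (transpose (Fmat T C - R) ** (Fmat T C - R) ** Sigma0)
          + 1/2 * integral\<^sup>L M (\<lambda>\<omega>. (norm (xi \<omega>))\<^sup>2)"
      unfolding Zeq Seq by (rule cf[OF hX hA])
    show "(\<forall>t\<in>{0..T}. A t = C) \<longleftrightarrow> normal_matrix C"
      using At_const_iff[OF T, of C] hA by auto
    show "normal_matrix R" if "Sigma0 = mat 1 \<and> normal_matrix C"
      using nR[of C lam T R] ch that by simp
  qed
  have part3: "Sigma0 = mat 1 \<and> \<not> normal_matrix R \<longrightarrow>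
        (\<forall>X Y A. hamilton_solution M X0 Z lam T X Y A \<longrightarrow> \<not> (\<exists>B. \<forall>t\<in>{0..T}. A t = B))"
  proof (intro impI allI notI)
    fix X Y A
    assume s: "Sigma0 = mat 1 \<and> \<not> normal_matrix R" and h: "hamilton_solution M X0 Z lam T X Y A"
      and "\<exists>B. \<forall>t\<in>{0..T}. A t = B"
    then obtain B where B: "\<forall>t\<in>{0..T}. A t = B" by blast
    obtain C where ch: "lam *\<^sub>R C = transpose (Fmat T C) ** (R - Fmat T C) ** Sigma0"
      and hA: "\<forall>t\<in>{0..T}. A t = At C t"
      using part1 h by blast
    have T0: "0 \<in> {0..T}" using T by auto
    have "B = C" using B hA T0 At_0[of C] by metis
    then have "\<forall>t\<in>{0..T}. At C t = C" using B hA by metis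
    then have "normal_matrix C" using At_const_iff[OF T] by blast
    then have "normal_matrix R" using nR[of C lam T R] ch s by simp
    then show False using s by blast
  qed
  show ?thesis
    using part1 part2 part3 unfolding Qm_def Pm_def At_def by blast
qed

end
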